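(* For the $n\times m$ grid communication graph $G$, the starvation-number satisfies $SN(G)=\min(n,m)$.
   Context: Model. A system consists of pairwise disjoint unit circles in the plane (trajectories) and a communication range $r>0$. Its communication graph $G$ has the circles as vertices, two adjacent iff the distance between their centres is at most $2+r$. Positions on a circle are angles (mod $2\pi$). For an edge $(i,j)$, the link position $\phi_{ij}$ is the angle of the point of $C_i$ closest to $C_j$. A schedule $F=(f,g)$ assigns each circle a starting angle $f(C_i)$ and direction $g(C_i)\in\{1,-1\}$; a robot following it on $C_i$ is at $f(C_i)+g(C_i)2\pi t$ at time $t$. $F$ is a synchronization schedule if $g(C_i)=-g(C_j)$ for adjacent circles and robots following $F$ on adjacent $C_i,C_j$ are at $\phi_{ij},\phi_{ji}$ at exactly the same times. A synchronized communication system (SCS) on $G$ consists of robots, initially one per circle, following a synchronization schedule, with the switching rule: when a robot on $C_i$ reaches $\phi_{ij}$ and $C_j$ is empty, it instantly passes to $C_j$ and follows the schedule of $C_j$; if $C_j$ has a robot, they meet and each stays on its circle. A partial SCS arises by letting some robots leave (possibly at different times); remaining robots never leave. A surviving robot $u$ starves if every time $u$ arrives at a link position $\phi_{ij}$ of its current circle $C_i$, the circle $C_j$ is empty. The starvation-number $SN(G)$ is the maximum possible number of starving robots in a (partial) SCS on $G$. Grid. The $n\times m$ grid communication graph consists of $nm$ unit circles, circle $(i,j)$ in row $i$ (rows horizontal) and column $j$ (columns vertical), centres on a square lattice, circle $(i,j)$ adjacent exactly to the existing circles $(i\pm1,j)$, $(i,j\pm1)$. *)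

theory Defs
  imports Complex_Main
begin

text \<open>A system: a finite set V of indices of unit circles, centres cen :: 'v => complex
  (the plane is identified with the complex numbers) and a communication range r.\<close>

definition comm_adj :: "'v set \<Rightarrow> ('v \<Rightarrow> complex) \<Rightarrow> real \<Rightarrow> 'v \<Rightarrow> 'v \<Rightarrow> bool" where
  "comm_adj V cen r v w \<longleftrightarrow> v \<in> V \<and> w \<in> V \<and> v \<noteq> w \<and> cmod (cen v - cen w) \<le> 2 + r"

text \<open>Link position: angle of the point of the unit circle around cen v closest to the
  circle around cen w, i.e. the direction of cen w - cen v.\<close>
definition link_pos :: "('v \<Rightarrow> complex) \<Rightarrow> 'v \<Rightarrow> 'v \<Rightarrow> real" where
  "link_pos cen v w = Arg (cen w - cen v)"

definition at_pos :: "('v \<Rightarrow> real) \<Rightarrow> ('v \<Rightarrow> real) \<Rightarrow> 'v \<Rightarrow> real \<Rightarrow> real \<Rightarrow> bool" where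
  "at_pos f g v t \<theta> \<longleftrightarrow> (\<exists>k::int. f v + g v * 2 * pi * t = \<theta> + 2 * pi * of_int k)"

definition sync_schedule ::
  "'v set \<Rightarrow> ('v \<Rightarrow> complex) \<Rightarrow> real \<Rightarrow> ('v \<Rightarrow> real) \<Rightarrow> ('v \<Rightarrow> real) \<Rightarrow> bool" where
  "sync_schedule V cen r f g \<longleftrightarrow>
     (\<forall>v\<in>V. g v = 1 \<or> g v = -1) \<and>
     (\<forall>v w. comm_adj V cen r v w \<longrightarrow>
        g v = - g w \<and>
        (\<forall>t. at_pos f g v t (link_pos cen v w) \<longleftrightarrow> at_pos f g w t (link_pos cen w v)))"

text \<open>Robots are indexed by their initial circle. loc u t is the circle of robot u at
  time t (after any switching at time t), None once u has left. leftval loc u t x: the value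
  just before time t is x.\<close>
definition leftval :: "('v \<Rightarrow> real \<Rightarrow> 'v option) \<Rightarrow> 'v \<Rightarrow> real \<Rightarrow> 'v option \<Rightarrow> bool" where
  "leftval loc u t x \<longleftrightarrow> (\<exists>\<epsilon>>0. \<forall>s. t - \<epsilon> < s \<and> s < t \<longrightarrow> loc u s = x)"

definition empty_before :: "'v set \<Rightarrow> ('v \<Rightarrow> real \<Rightarrow> 'v option) \<Rightarrow> real \<Rightarrow> 'v \<Rightarrow> bool" where
  "empty_before V loc t j \<longleftrightarrow> (\<forall>w\<in>V. \<not> leftval loc w t (Some j))"

text \<open>A (partial) synchronized communication system on the system following schedule (f,g):
  start with one robot per circle, robots may leave at arbitrary times (never to return),
  and robots present obey the switching rule.\<close>
definition valid_run ::
  "'v set \<Rightarrow> ('v \<Rightarrow> complex) \<Rightarrow> real \<Rightarrow> ('v \<Rightarrow> real) \<Rightarrow> ('v \<Rightarrow> real)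
     \<Rightarrow> ('v \<Rightarrow> real \<Rightarrow> 'v option) \<Rightarrow> bool" where
  "valid_run V cen r f g loc \<longleftrightarrow>
     (\<forall>u\<in>V. \<forall>t<0. loc u t = Some u) \<and>
     (\<forall>u\<in>V. \<forall>t. \<exists>\<epsilon>>0. \<forall>s. t \<le> s \<and> s < t + \<epsilon> \<longrightarrow> loc u s = loc u t) \<and>
     (\<forall>u\<in>V. \<forall>t. \<exists>x. leftval loc u t x) \<and>
     (\<forall>u\<in>V. \<forall>t s. t \<le> s \<and> loc u t = None \<longrightarrow> loc u s = None) \<and>
     (\<forall>u\<in>V. \<forall>t\<ge>0. \<forall>i. leftval loc u t (Some i) \<and> loc u t \<noteq> None \<longrightarrow>
        ((\<exists>j. comm_adj V cen r i j \<and> at_pos f g i t (link_pos cen i j) \<and> empty_before V loc t j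
              \<and> loc u t = Some j) \<or>
         ((\<nexists>j. comm_adj V cen r i j \<and> at_pos f g i t (link_pos cen i j) \<and> empty_before V loc t j)
              \<and> loc u t = Some i)))"

definition survives :: "'v set \<Rightarrow> ('v \<Rightarrow> real \<Rightarrow> 'v option) \<Rightarrow> 'v \<Rightarrow> bool" where
  "survives V loc u \<longleftrightarrow> u \<in> V \<and> (\<forall>t. loc u t \<noteq> None)"

definition starves ::
  "'v set \<Rightarrow> ('v \<Rightarrow> complex) \<Rightarrow> real \<Rightarrow> ('v \<Rightarrow> real) \<Rightarrow> ('v \<Rightarrow> real)
     \<Rightarrow> ('v \<Rightarrow> real \<Rightarrow> 'v option) \<Rightarrow> 'v \<Rightarrow> bool" where
  "starves V cen r f g loc u \<longleftrightarrow> survives V loc u \<and>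
     (\<forall>t\<ge>0. \<forall>i j. leftval loc u t (Some i) \<and> comm_adj V cen r i j \<and>
        at_pos f g i t (link_pos cen i j) \<longrightarrow> empty_before V loc t j)"

definition starvation_number :: "'v set \<Rightarrow> ('v \<Rightarrow> complex) \<Rightarrow> real \<Rightarrow> nat" where
  "starvation_number V cen r =
     Max {card {u\<in>V. starves V cen r f g loc u} | f g loc.
            sync_schedule V cen r f g \<and> valid_run V cen r f g loc}"

definition grid :: "nat \<Rightarrow> nat \<Rightarrow> (nat \<times> nat) set" where
  "grid n m = {(i, j). i < n \<and> j < m}"

definition grid_adj :: "nat \<times> nat \<Rightarrow> nat \<times> nat \<Rightarrow> bool" where
  "grid_adj v w \<longleftrightarrow>
     (fst v = fst w \<and> (snd w = snd v + 1 \<or> snd v = snd w + 1)) \<or>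
     (snd v = snd w \<and> (fst w = fst v + 1 \<or> fst v = fst w + 1))"

definition grid_centre :: "complex \<Rightarrow> complex \<Rightarrow> nat \<times> nat \<Rightarrow> complex" where
  "grid_centre a b v = a + (of_nat (snd v) + \<i> * of_nat (fst v)) * b"

end

theory Submission
  imports Defs
begin

definition fw :: "int \<Rightarrow> int \<Rightarrow> nat \<Rightarrow> bool" where
  "fw e p x \<longleftrightarrow> 4 dvd (e - 2 * int x - p)"
definition bw :: "int \<Rightarrow> int \<Rightarrow> nat \<Rightarrow> bool" where
  "bw e p x \<longleftrightarrow> 4 dvd (e - 2 * int x - 2 - p)"

lemma dvd4_eq: "4 dvd (a::int) \<Longrightarrow> b = a + 4 * k \<Longrightarrow> 4 dvd b" by simp

lemma fw_bw: "fw e p x \<Longrightarrow> \<not> bw e p x"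
proof
  assume "fw e p x" "bw e p x"
  then have "4 dvd ((e - 2 * int x - p) - (e - 2 * int x - 2 - p))" unfolding fw_def bw_def by (rule dvd_diff)
  then show False by simp
qed
lemma fw_suc: "fw e p x \<Longrightarrow> bw e p (Suc x)"
  unfolding fw_def bw_def by (erule dvd4_eq[where k = "-1"]) simp
lemma bw_suc: "bw e p x \<Longrightarrow> fw e p (Suc x)"
  unfolding fw_def bw_def by (erule dvd4_eq[where k = 0]) simp
lemma suc_fw: "fw e p (Suc x) \<Longrightarrow> bw e p x"
  unfolding fw_def bw_def by (erule dvd4_eq[where k = 0]) simp
lemma suc_bw: "bw e p (Suc x) \<Longrightarrow> fw e p x"
  unfolding fw_def bw_def by (erule dvd4_eq[where k = 1]) simp

lemma mod2_iff: "(e::int) mod 2 = p mod 2 \<longleftrightarrow> even (e - p)"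
  by (simp add: mod_eq_dvd_iff)

lemma fw_or_bw: assumes "e mod 2 = p mod 2" shows "fw e p x \<or> bw e p x"
proof -
  have "even (e - p)" using assms mod2_iff by blast
  then obtain k where k: "e - p = 2 * k" by (elim evenE)
  show ?thesis
  proof (cases "even (k - int x)")
    case True
    then obtain l where l: "k - int x = 2 * l" by (elim evenE)
    have "e - 2 * int x - p = 4 * l" using k l by simp
    then show ?thesis unfolding fw_def by simp
  next
    case False
    then obtain l where l: "k - int x = 2 * l + 1" by (elim oddE)
    have "e - 2 * int x - 2 - p = 4 * l" using k l by simp
    then show ?thesis unfolding bw_def by simp
  qed
qed

lemma mod4_mod2: "(e::int) mod 4 = y mod 4 \<Longrightarrow> e mod 2 = y mod 2"
proof -
  assume "e mod 4 = y mod 4"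
  then have "e mod 4 mod 2 = y mod 4 mod 2" by simp
  then show ?thesis by (simp add: mod_mod_cancel)
qed

lemma fw_act: assumes "fw e p x" shows "e mod 2 = p mod 2"
proof -
  obtain k where k: "e - 2 * int x - p = 4 * k" using assms unfolding fw_def by (elim dvdE)
  then have "e - p = 2 * (2 * k + int x)" by simp
  then show ?thesis unfolding mod2_iff by simp
qed
lemma bw_act: assumes "bw e p x" shows "e mod 2 = p mod 2"
proof -
  obtain k where k: "e - 2 * int x - 2 - p = 4 * k" using assms unfolding bw_def by (elim dvdE)
  then have "e - p = 2 * (2 * k + int x + 1)" by simp
  then show ?thesis unfolding mod2_iff by simp
qed
lemma inact: "e mod 2 \<noteq> p mod 2 \<Longrightarrow> \<not> fw e p x \<and> \<not> bw e p x"
  using fw_act bw_act by blast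

lemma fw_shift: "s = 1 \<or> s = -1 \<Longrightarrow> fw (e + 2*s) p x \<longleftrightarrow> bw e p x"
proof -
  assume "s = 1 \<or> s = -1"
  then show ?thesis
  proof
    assume s: "s = 1"
    have eq: "e + 2 * s - 2 * int x - p = (e - 2 * int x - 2 - p) + 1 * 4" using s by simp
    show ?thesis unfolding fw_def bw_def eq dvd_add_times_triv_right_iff ..
  next
    assume s: "s = -1"
    have eq: "e + 2 * s - 2 * int x - p = (e - 2 * int x - 2 - p)" using s by simp
    show ?thesis unfolding fw_def bw_def eq ..
  qed
qed
lemma bw_shift: "s = 1 \<or> s = -1 \<Longrightarrow> bw (e + 2*s) p x \<longleftrightarrow> fw e p x"
proof -
  assume "s = 1 \<or> s = -1"
  then show ?thesis
  proof
    assume s: "s = 1"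
    have eq: "e + 2 * s - 2 * int x - 2 - p = (e - 2 * int x - p)" using s by simp
    show ?thesis unfolding fw_def bw_def eq ..
  next
    assume s: "s = -1"
    have eq: "e + 2 * s - 2 * int x - 2 - p = (e - 2 * int x - p) + (-1) * 4" using s by simp
    show ?thesis unfolding fw_def bw_def eq dvd_add_times_triv_right_iff ..
  qed
qed

lemma ff_par: assumes "fw e p x" "fw e p y" shows "even (int x + int y)"
proof -
  obtain k where k: "e - 2 * int x - p = 4 * k" using assms(1) unfolding fw_def by (elim dvdE)
  obtain l where l: "e - 2 * int y - p = 4 * l" using assms(2) unfolding fw_def by (elim dvdE)
  have "int x + int y = 2 * (int y + l - k)" using k l by simp
  then show ?thesis by simp
qed
lemma bb_par: assumes "bw e p x" "bw e p y" shows "even (int x + int y)"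
proof -
  obtain k where k: "e - 2 * int x - 2 - p = 4 * k" using assms(1) unfolding bw_def by (elim dvdE)
  obtain l where l: "e - 2 * int y - 2 - p = 4 * l" using assms(2) unfolding bw_def by (elim dvdE)
  have "int x + int y = 2 * (int y + l - k)" using k l by simp
  then show ?thesis by simp
qed
lemma fb_par: assumes "fw e p x" "bw e p y" shows "odd (int x + int y)"
proof -
  obtain k where k: "e - 2 * int x - p = 4 * k" using assms(1) unfolding fw_def by (elim dvdE)
  obtain l where l: "e - 2 * int y - 2 - p = 4 * l" using assms(2) unfolding bw_def by (elim dvdE)
  have "int x + int y = 2 * (int y + l - k) + 1" using k l by simp
  then show ?thesis by simp
qed

definition st :: "nat \<Rightarrow> int \<Rightarrow> int \<Rightarrow> nat \<Rightarrow> nat" where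
 "st M p e x = (if fw e p x \<and> x + 1 < M then x + 1
   else if bw e p x \<and> 1 \<le> x then x - 1 else x)"

definition lift :: "nat \<Rightarrow> int \<Rightarrow> int \<Rightarrow> nat \<Rightarrow> int" where
 "lift M p e x = (if fw e p x then int x else 2 * int M - 1 - int x)"

lemma st_lt: "x < M \<Longrightarrow> st M p e x < M"
  unfolding st_def by auto

lemma st_cases:
  "(fw e p x \<and> x + 1 < M \<and> st M p e x = x + 1) \<or>
   (\<not> (fw e p x \<and> x + 1 < M) \<and> bw e p x \<and> 1 \<le> x \<and> st M p e x = x - 1) \<or>
   (\<not> (fw e p x \<and> x + 1 < M) \<and> \<not> (bw e p x \<and> 1 \<le> x) \<and> st M p e x = x)"
  unfolding st_def by auto

lemma st_inj_lt: assumes "x < y" "y < M" "st M p e x = st M p e y" shows False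
proof -
  consider (a) "fw e p x" "x + 1 < M" "st M p e x = x + 1"
    | (b) "st M p e x = x - 1" "1 \<le> x"
    | (c) "\<not> (fw e p x \<and> x + 1 < M)" "\<not> (bw e p x \<and> 1 \<le> x)" "st M p e x = x"
    using st_cases[of e p x M] by blast
  then show False
  proof cases
    case a
    consider (a1) "st M p e y = y + 1" | (a2) "bw e p y" "1 \<le> y" "st M p e y = y - 1"
      | (a3) "\<not> (bw e p y \<and> 1 \<le> y)" "st M p e y = y"
      using st_cases[of e p y M] by blast
    then show False
    proof cases
      case a1 then show ?thesis using a assms by simp
    next
      case a2
      then have "y = Suc (Suc x)" using a assms by simp
      then have "fw e p (Suc x)" using suc_bw a2 by blast
      then have "bw e p x" using suc_fw by blast
      then show ?thesis using a fw_bw by blast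
    next
      case a3
      then have "y = Suc x" using a assms by simp
      then have "bw e p y" using fw_suc a by blast
      then show ?thesis using a3 \<open>y = Suc x\<close> by simp
    qed
  next
    case b
    have "st M p e y \<ge> y - 1" using st_cases[of e p y M] by auto
    then show ?thesis using b assms by simp
  next
    case c
    have "st M p e y \<ge> y - 1" using st_cases[of e p y M] by auto
    then have "st M p e y = y - 1" "y = Suc x" using c assms st_cases[of e p y M] by auto
    then have "bw e p y" using st_cases[of e p y M] by auto
    then have "fw e p x" using suc_bw \<open>y = Suc x\<close> by blast
    then show ?thesis using c assms \<open>y = Suc x\<close> by simp
  qed
qed

lemma st_inj: "x < M \<Longrightarrow> y < M \<Longrightarrow> st M p e x = st M p e y \<Longrightarrow> x = y"
  using st_inj_lt by (metis linorder_neqE_nat)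

lemma st_inactive: "e mod 2 \<noteq> p mod 2 \<Longrightarrow> st M p e x = x"
  using inact unfolding st_def by auto

lemma st_changed: "st M p e x \<noteq> x \<Longrightarrow> e mod 2 = p mod 2"
  using st_inactive by metis


lemma lift_next:
  assumes act: "e mod 2 = p mod 2" and s: "s = 1 \<or> s = -1" and x: "x < M"
  shows "lift M p (e + 2*s) (st M p e x) = (if lift M p e x = 2*int M-1 then 0 else lift M p e x + 1)"
proof -
  consider (a) "fw e p x" "x + 1 < M" | (b) "fw e p x" "x + 1 = M" | (c) "bw e p x" "1 \<le> x"
    | (d) "bw e p x" "x = 0"
    using fw_or_bw[OF act, of x] x by linarith
  then show ?thesis
  proof cases
    case a
    then have "st M p e x = Suc x" by (simp add: st_def)
    moreover have "fw (e + 2*s) p (Suc x)" using fw_shift[OF s] fw_suc a by blast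
    ultimately show ?thesis using a x by (simp add: lift_def)
  next
    case b
    then have "st M p e x = x" using fw_bw by (simp add: st_def)
    moreover have "\<not> fw (e + 2*s) p x" using fw_shift[OF s] fw_bw b by blast
    ultimately show ?thesis using b x by (simp add: lift_def)
  next
    case c
    then have nf: "\<not> fw e p x" using fw_bw by blast
    then have "st M p e x = x - 1" using c by (simp add: st_def)
    moreover have "fw e p (x - 1)" using suc_bw c by (metis Suc_diff_1 less_le_trans zero_less_one)
    then have "\<not> fw (e + 2*s) p (x - 1)" using fw_shift[OF s] fw_bw by blast
    ultimately show ?thesis using c nf x by (simp add: lift_def of_nat_diff)
  next
    case d
    then have nf: "\<not> fw e p x" using fw_bw by blast
    then have "st M p e x = x" using d by (simp add: st_def)
    moreover have "fw (e + 2*s) p x" using fw_shift[OF s] d by blast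
    ultimately show ?thesis using d nf by (simp add: lift_def)
  qed
qed

lemma lift_range: "x < M \<Longrightarrow> 0 \<le> lift M p e x \<and> lift M p e x < 2 * int M"
  unfolding lift_def by auto

lemma lift_par: assumes "e mod 2 = p mod 2" shows "even (lift M p e x + lift M p e y)"
proof -
  have x: "fw e p x \<or> bw e p x" and y: "fw e p y \<or> bw e p y" using fw_or_bw assms by blast+
  show ?thesis
  proof (cases "fw e p x")
    case fx: True
    show ?thesis
    proof (cases "fw e p y")
      case True
      then have "even (int x + int y)" using fx ff_par by blast
      then show ?thesis using fx \<open>fw e p y\<close> by (simp add: lift_def)
    next
      case False
      then have "odd (int x + int y)" using fx fb_par y by blast
      then have "even (int x + (2 * int M - 1 - int y))" by simp
      then show ?thesis using fx False by (simp add: lift_def)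
    qed
  next
    case fx: False
    show ?thesis
    proof (cases "fw e p y")
      case True
      then have "odd (int y + int x)" using fx fb_par x by blast
      then have "even ((2 * int M - 1 - int x) + int y)" by simp
      then show ?thesis using fx True by (simp add: lift_def)
    next
      case False
      then have "even (int x + int y)" using fx x y bb_par by blast
      then have "even ((2 * int M - 1 - int x) + (2 * int M - 1 - int y))" by simp
      then show ?thesis using fx False by (simp add: lift_def)
    qed
  qed
qed

lemma decode:
  assumes "x < M" "y < M" "x \<noteq> y" "e mod 2 = p mod 2"
    "lift M p e x + lift M p e y = 2*int M - 2 \<or> lift M p e x + lift M p e y = 4*int M - 2"
  shows "st M p e x = y \<or> st M p e y = x"
proof -
  show ?thesis
  proof (cases "fw e p x")
    case fx: True
    show ?thesis
    proof (cases "fw e p y")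
      case True
      then have "int x + int y = 2*int M - 2 \<or> int x + int y = 4*int M - 2"
        using fx assms(5) by (simp add: lift_def)
      then show ?thesis using assms(1-3) by linarith
    next
      case False
      then have "int x + (2*int M - 1 - int y) = 2*int M - 2 \<or> int x + (2*int M - 1 - int y) = 4*int M - 2"
        using fx assms(5) by (simp add: lift_def)
      then have "y = x + 1" using assms(1-3) by linarith
      then show ?thesis using fx assms by (simp add: st_def)
    qed
  next
    case fx: False
    show ?thesis
    proof (cases "fw e p y")
      case True
      then have "(2*int M - 1 - int x) + int y = 2*int M - 2 \<or> (2*int M - 1 - int x) + int y = 4*int M - 2"
        using fx assms(5) by (simp add: lift_def)
      then have "x = y + 1" using assms(1-3) by linarith
      then show ?thesis using True assms by (simp add: st_def)
    next
      case False
      then have "(2*int M - 1 - int x) + (2*int M - 1 - int y) = 2*int M - 2 \<or> (2*int M - 1 - int x) + (2*int M - 1 - int y) = 4*int M - 2"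
        using fx assms(5) by (simp add: lift_def)
      then show ?thesis using assms(1-3) by linarith
    qed
  qed
qed

lemma wrap: "0 \<le> a \<Longrightarrow> a < N \<Longrightarrow> (if a = N - 1 then 0 else a + 1) = (a + 1) mod (N::int)"
  by auto

lemma twocases:
  fixes S N :: int
  assumes "0 \<le> S" "S < 2*N" "S mod N = N - 2" "N \<ge> 2"
  shows "S = N - 2 \<or> S = 2*N - 2"
proof (cases "S < N")
  case True then show ?thesis using assms by simp
next
  case False
  have "(S - N) mod N = S mod N" by (metis diff_add_cancel mod_add_self2)
  moreover have "(S - N) mod N = S - N" using False assms by (intro mod_pos_pos_trivial) auto
  ultimately have "S - N = N - 2" using assms by simp
  then show ?thesis by simp
qed

lemma oneD:
  fixes e :: "nat \<Rightarrow> int" and x y :: "nat \<Rightarrow> nat"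
  assumes es: "\<And>j. e (Suc j) = e j + s" and s: "s = 1 \<or> s = -1"
    and xs: "\<And>j. x (Suc j) = st M p (e j) (x j)" and ys: "\<And>j. y (Suc j) = st M p (e j) (y j)"
    and x0: "x 0 < M" and y0: "y 0 < M" and ne: "x 0 \<noteq> y 0"
  shows "\<exists>j. st M p (e j) (x j) = y j \<or> st M p (e j) (y j) = x j"
proof -
  have inv: "x j < M \<and> y j < M \<and> x j \<noteq> y j" for j
  proof (induction j)
    case 0 then show ?case using x0 y0 ne by simp
  next
    case (Suc j) then show ?case using st_lt st_inj by (metis xs ys)
  qed
  have sodd: "odd s" using s by auto
  obtain j0 where j0: "e j0 mod 2 = p mod 2"
  proof (cases "e 0 mod 2 = p mod 2")
    case True then show ?thesis using that by blast
  next
    case False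
    have "e 1 = e 0 + s" using es[of 0] by simp
    then have "e 1 - p = (e 0 - p) + s" by simp
    then have "e 1 mod 2 = p mod 2" using False sodd by (simp add: mod2_iff)
    then show ?thesis using that by blast
  qed
  define h where "h i = j0 + 2*i" for i
  have hS: "h (Suc i) = Suc (Suc (h i))" for i by (simp add: h_def)
  have eh: "e (h (Suc i)) = e (h i) + 2*s" for i unfolding hS using es by simp
  have act: "e (h i) mod 2 = p mod 2" for i
  proof (induction i)
    case 0 then show ?case using j0 by (simp add: h_def)
  next
    case (Suc i) then show ?case using eh[of i] by simp
  qed
  have inact: "e (Suc (h i)) mod 2 \<noteq> p mod 2" for i
  proof -
    have "e (Suc (h i)) - p = (e (h i) - p) + s" using es[of "h i"] by simp
    then show ?thesis using act[of i] sodd by (simp add: mod2_iff)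
  qed
  have xh: "x (h (Suc i)) = st M p (e (h i)) (x (h i))" for i
    unfolding hS xs[of "Suc (h i)"] st_inactive[OF inact] xs ..
  have yh: "y (h (Suc i)) = st M p (e (h i)) (y (h i))" for i
    unfolding hS ys[of "Suc (h i)"] st_inactive[OF inact] ys ..
  define N where "N = 2 * int M"
  have M1: "M \<ge> 1" using x0 by simp
  define L where "L i = lift M p (e (h i)) (x (h i))" for i
  define K where "K i = lift M p (e (h i)) (y (h i))" for i
  have Lr: "0 \<le> L i \<and> L i < N" for i unfolding L_def N_def using lift_range inv by blast
  have Kr: "0 \<le> K i \<and> K i < N" for i unfolding K_def N_def using lift_range inv by blast
  have Ln: "L (Suc i) = (L i + 1) mod N" for i
  proof -
    have "L (Suc i) = lift M p (e (h i) + 2*s) (st M p (e (h i)) (x (h i)))"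
      unfolding L_def eh xh ..
    also have "\<dots> = (if L i = N - 1 then 0 else L i + 1)"
      using lift_next[OF act s, of "x (h i)" M] inv unfolding L_def N_def by simp
    also have "\<dots> = (L i + 1) mod N" using wrap Lr by blast
    finally show ?thesis .
  qed
  have Kn: "K (Suc i) = (K i + 1) mod N" for i
  proof -
    have "K (Suc i) = lift M p (e (h i) + 2*s) (st M p (e (h i)) (y (h i)))"
      unfolding K_def eh yh ..
    also have "\<dots> = (if K i = N - 1 then 0 else K i + 1)"
      using lift_next[OF act s, of "y (h i)" M] inv unfolding K_def N_def by simp
    also have "\<dots> = (K i + 1) mod N" using wrap Kr by blast
    finally show ?thesis .
  qed
  have Lf: "L i = (L 0 + int i) mod N" for i
  proof (induction i)
    case 0 then show ?case using Lr by simp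
  next
    case (Suc i) then show ?case unfolding Ln by (simp add: mod_add_right_eq ac_simps)
  qed
  have Kf: "K i = (K 0 + int i) mod N" for i
  proof (induction i)
    case 0 then show ?case using Kr by simp
  next
    case (Suc i) then show ?case unfolding Kn by (simp add: mod_add_right_eq ac_simps)
  qed
  have "even (L 0 + K 0)" unfolding L_def K_def using lift_par act by blast
  then obtain c where c: "L 0 + K 0 = 2*c" by (metis evenE)
  define i where "i = nat ((int M - 1 - c) mod int M)"
  have ii: "int i = (int M - 1 - c) mod int M" unfolding i_def using M1 by simp
  have "(L i + K i) mod N = (L 0 + int i + (K 0 + int i)) mod N"
    unfolding Lf[of i] Kf[of i] by (simp add: mod_add_eq)
  also have "\<dots> = (2*c + 2 * int i) mod N" proof - have "L 0 + int i + (K 0 + int i) = 2*c + 2 * int i" using c by simp then show ?thesis by (simp only:) qed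
  also have "2 * int i = (2 * (int M - 1 - c)) mod N" unfolding ii N_def by (metis mod_mult_mult1)
  also have "(2*c + (2 * (int M - 1 - c)) mod N) mod N = (2*c + 2 * (int M - 1 - c)) mod N"
    by (simp add: mod_add_right_eq)
  also have "\<dots> = (N - 2) mod N" proof - have "2*c + 2 * (int M - 1 - c) = N - 2" unfolding N_def by simp then show ?thesis by (simp only:) qed
  also have "\<dots> = N - 2" using M1 unfolding N_def by (intro mod_pos_pos_trivial) auto
  finally have Smod: "(L i + K i) mod N = N - 2" .
  have "L i + K i = N - 2 \<or> L i + K i = 2*N - 2"
    by (rule twocases) (use Lr[of i] Kr[of i] Smod M1 N_def in auto)
  then have "lift M p (e (h i)) (x (h i)) + lift M p (e (h i)) (y (h i)) = 2*int M - 2 \<or>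
      lift M p (e (h i)) (x (h i)) + lift M p (e (h i)) (y (h i)) = 4*int M - 2"
    unfolding L_def K_def N_def by simp
  then have "st M p (e (h i)) (x (h i)) = y (h i) \<or> st M p (e (h i)) (y (h i)) = x (h i)"
    using decode inv act by blast
  then show ?thesis by blast
qed

definition noev :: "'v set \<Rightarrow> ('v \<Rightarrow> complex) \<Rightarrow> real \<Rightarrow> ('v \<Rightarrow> real) \<Rightarrow> ('v \<Rightarrow> real) \<Rightarrow> real \<Rightarrow> bool" where
  "noev V cen r f g t \<longleftrightarrow> \<not> (\<exists>i j. comm_adj V cen r i j \<and> at_pos f g i t (link_pos cen i j))"


lemma vr_neg: "valid_run V cen r f g loc \<Longrightarrow> u \<in> V \<Longrightarrow> t < 0 \<Longrightarrow> loc u t = Some u"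
  unfolding valid_run_def by blast
lemma vr_right: "valid_run V cen r f g loc \<Longrightarrow> u \<in> V \<Longrightarrow> \<exists>\<epsilon>>0. \<forall>s. t \<le> s \<and> s < t + \<epsilon> \<longrightarrow> loc u s = loc u t"
  unfolding valid_run_def by blast
lemma vr_left: "valid_run V cen r f g loc \<Longrightarrow> u \<in> V \<Longrightarrow> \<exists>x. leftval loc u t x"
  unfolding valid_run_def by blast
lemma vr_rule: "valid_run V cen r f g loc \<Longrightarrow> u \<in> V \<Longrightarrow> t \<ge> 0 \<Longrightarrow> leftval loc u t (Some i) \<Longrightarrow> loc u t \<noteq> None \<Longrightarrow>
        ((\<exists>j. comm_adj V cen r i j \<and> at_pos f g i t (link_pos cen i j) \<and> empty_before V loc t j
              \<and> loc u t = Some j) \<or>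
         ((\<nexists>j. comm_adj V cen r i j \<and> at_pos f g i t (link_pos cen i j) \<and> empty_before V loc t j)
              \<and> loc u t = Some i))"
  unfolding valid_run_def by blast

lemma leftval_unique:
  assumes "leftval loc u t x" "leftval loc u t y" shows "x = y"
proof -
  obtain e1 where e1: "e1 > 0" "\<forall>s. t - e1 < s \<and> s < t \<longrightarrow> loc u s = x" using assms(1) leftval_def by metis
  obtain e2 where e2: "e2 > 0" "\<forall>s. t - e2 < s \<and> s < t \<longrightarrow> loc u s = y" using assms(2) leftval_def by metis
  define s where "s = t - min e1 e2 / 2"
  have "t - e1 < s" "s < t" "t - e2 < s" using e1 e2 by (auto simp: s_def)
  then show ?thesis using e1 e2 by metis
qed

lemma loc_noev:
  assumes vr: "valid_run V cen r f g loc" and u: "u \<in> V" and sv: "survives V loc u"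
    and ne: "noev V cen r f g t"
  shows "leftval loc u t (loc u t)"
proof -
  obtain x where x: "leftval loc u t x" using vr_left[OF vr u, of t] by blast
  obtain e1 where e1: "e1 > 0" "\<forall>s. t - e1 < s \<and> s < t \<longrightarrow> loc u s = x" using x leftval_def by metis
  have xs: "loc u (t - e1/2) = x" using e1(2)[rule_format, of "t - e1/2"] e1(1) by simp
  show ?thesis
  proof (cases "t < 0")
    case True
    have "loc u (t - e1/2) = Some u" "loc u t = Some u" using vr_neg[OF vr u, of "t - e1/2"] vr_neg[OF vr u, of t] True e1(1) by simp_all
    then show ?thesis using x xs by simp
  next
    case False
    have "x \<noteq> None" using sv xs unfolding survives_def by auto
    then obtain i where xi: "x = Some i" by auto
    have "loc u t \<noteq> None" using sv unfolding survives_def by auto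
    then have "(\<exists>j. comm_adj V cen r i j \<and> at_pos f g i t (link_pos cen i j) \<and> empty_before V loc t j
              \<and> loc u t = Some j) \<or>
         ((\<nexists>j. comm_adj V cen r i j \<and> at_pos f g i t (link_pos cen i j) \<and> empty_before V loc t j)
              \<and> loc u t = Some i)"
      using vr_rule[OF vr u] False x xi by auto
    then have "loc u t = Some i" using ne unfolding noev_def by blast
    then show ?thesis using x xi by simp
  qed
qed

lemma loc_const:
  assumes vr: "valid_run V cen r f g loc" and u: "u \<in> V" and sv: "survives V loc u"
    and ab: "a < b" and ne: "\<And>s. a < s \<Longrightarrow> s < b \<Longrightarrow> noev V cen r f g s"
  shows "\<And>s. a \<le> s \<Longrightarrow> s < b \<Longrightarrow> loc u s = loc u a"
proof (rule ccontr)
  fix s1 assume s1: "a \<le> s1" "s1 < b" "loc u s1 \<noteq> loc u a"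
  define S where "S = {s. a \<le> s \<and> s < b \<and> loc u s \<noteq> loc u a}"
  have s1S: "s1 \<in> S" using s1 S_def by auto
  have bdd: "bdd_below S" unfolding S_def by (rule bdd_belowI[of _ a]) auto
  define \<sigma> where "\<sigma> = Inf S"
  obtain e1 where e1: "e1 > 0" "\<forall>s. a \<le> s \<and> s < a + e1 \<longrightarrow> loc u s = loc u a"
    using vr_right[OF vr u, of a] by blast
  have lowS: "a + e1 \<le> s" if "s \<in> S" for s
  proof (rule ccontr)
    assume "\<not> a + e1 \<le> s"
    moreover have "a \<le> s" "loc u s \<noteq> loc u a" using that unfolding S_def by auto
    ultimately show False using e1(2)[rule_format, of s] by simp
  qed
  have sig1: "a + e1 \<le> \<sigma>" unfolding \<sigma>_def using s1S lowS by (intro cInf_greatest) auto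
  have sig2: "\<sigma> \<le> s1" unfolding \<sigma>_def using s1S bdd by (rule cInf_lower)
  have "a < \<sigma>" "\<sigma> < b" using sig1 sig2 e1(1) s1 by auto
  then have nes: "noev V cen r f g \<sigma>" using ne by blast
  obtain x where x: "leftval loc u \<sigma> x" using vr_left[OF vr u, of \<sigma>] by blast
  obtain e2 where e2: "e2 > 0" "\<forall>s. \<sigma> - e2 < s \<and> s < \<sigma> \<longrightarrow> loc u s = x" using x leftval_def by metis
  define s2 where "s2 = max a (\<sigma> - e2/2)"
  have s2: "\<sigma> - e2 < s2" "s2 < \<sigma>" "a \<le> s2" "s2 < b" using e2(1) \<open>a < \<sigma>\<close> \<open>\<sigma> < b\<close> by (auto simp: s2_def)
  have "s2 \<notin> S"
  proof
    assume "s2 \<in> S"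
    then have "\<sigma> \<le> s2" unfolding \<sigma>_def using bdd by (rule cInf_lower)
    then show False using s2 by simp
  qed
  then have "loc u s2 = loc u a" using s2 S_def by auto
  moreover have "loc u s2 = x" using e2(2)[rule_format, of s2] s2(1,2) by simp
  ultimately have xa: "x = loc u a" by simp
  have "leftval loc u \<sigma> (loc u \<sigma>)" using loc_noev[OF vr u sv nes] .
  then have lsig: "loc u \<sigma> = loc u a" using leftval_unique x xa by metis
  obtain e3 where e3: "e3 > 0" "\<forall>s. \<sigma> \<le> s \<and> s < \<sigma> + e3 \<longrightarrow> loc u s = loc u \<sigma>"
    using vr_right[OF vr u, of \<sigma>] by blast
  have lowS2: "\<sigma> + e3 \<le> s" if "s \<in> S" for s
  proof (rule ccontr)
    assume "\<not> \<sigma> + e3 \<le> s"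
    moreover have "\<sigma> \<le> s" unfolding \<sigma>_def using that bdd by (rule cInf_lower)
    moreover have "loc u s \<noteq> loc u a" using that unfolding S_def by simp
    ultimately show False using e3(2)[rule_format, of s] lsig by simp
  qed
  have "\<sigma> + e3 \<le> \<sigma>" unfolding \<sigma>_def using s1S lowS2 unfolding \<sigma>_def by (intro cInf_greatest) auto
  then show False using e3(1) by simp
qed

lemma leftval_end:
  assumes vr: "valid_run V cen r f g loc" and u: "u \<in> V" and sv: "survives V loc u"
    and ab: "a < b" and ne: "\<And>s. a < s \<Longrightarrow> s < b \<Longrightarrow> noev V cen r f g s"
  shows "leftval loc u b (loc u a)"
  unfolding leftval_def
proof (intro exI[of _ "b - a"] conjI allI impI)
  show "b - a > 0" using ab by simp
  fix s assume "b - (b - a) < s \<and> s < b"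
  then show "loc u s = loc u a" using loc_const[OF vr u sv ab ne, of s] by auto
qed

definition rc4 :: "real \<Rightarrow> real \<Rightarrow> bool" where "rc4 x y \<longleftrightarrow> (\<exists>k::int. x = y + 4 * of_int k)"
definition isg :: "nat \<Rightarrow> int" where "isg k = (if even k then 1 else -1)"
definition code :: "nat \<times> nat \<Rightarrow> nat \<times> nat \<Rightarrow> int" where
  "code v w = (if fst v = fst w then (if snd w = snd v + 1 then 0 else 2) else (if fst w = fst v + 1 then 1 else -1))"
definition step :: "nat \<Rightarrow> nat \<Rightarrow> int \<Rightarrow> nat \<times> nat \<Rightarrow> nat \<times> nat" where
  "step n m e v = (st n 1 e (fst v), st m 0 e (snd v))"
definition Xv :: "(nat \<times> nat \<Rightarrow> real) \<Rightarrow> (nat \<times> nat \<Rightarrow> real) \<Rightarrow> complex \<Rightarrow> nat \<times> nat \<Rightarrow> real \<Rightarrow> real" where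
  "Xv f g b v t = (f v + g v * 2 * pi * t - Arg b) * 2 / pi"

lemma cis_eq_iff2: "cis x = cis y \<longleftrightarrow> (\<exists>k::int. x = y + 2*pi*of_int k)"
proof -
  have "cis x = cis y \<longleftrightarrow> sin x = sin y \<and> cos x = cos y" by (auto simp: complex_eq_iff)
  also have "\<dots> \<longleftrightarrow> (\<exists>k::int. x = y + 2*pi*of_int k)" by (rule sin_cos_eq_iff)
  finally show ?thesis .
qed

lemma at_pos_cis: "at_pos f g v t \<theta> \<longleftrightarrow> cis (f v + g v * 2 * pi * t) = cis \<theta>"
  unfolding at_pos_def cis_eq_iff2 by simp

lemma cis_rc4: "cis (A + x * pi / 2) = cis (A + y * pi / 2) \<longleftrightarrow> rc4 x y"
proof -
  have eq: "(A + x * pi / 2 = A + y * pi / 2 + 2*pi*of_int k) \<longleftrightarrow> (x = y + 4 * of_int k)" for k :: int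
  proof
    assume "A + x * pi / 2 = A + y * pi / 2 + 2*pi*of_int k"
    then have "(x - y - 4 * of_int k) * pi = 0" by (simp add: algebra_simps)
    then show "x = y + 4 * of_int k" by simp
  next
    assume "x = y + 4 * of_int k" then show "A + x * pi / 2 = A + y * pi / 2 + 2*pi*of_int k"
      by (simp add: algebra_simps)
  qed
  show ?thesis unfolding cis_eq_iff2 rc4_def eq ..
qed

lemma Xv_eq: "f v + g v * 2 * pi * t = Arg b + Xv f g b v t * pi / 2"
  by (simp add: Xv_def field_simps)

lemma grid_adj_cases:
  assumes "grid_adj v w"
  obtains (E) "fst w = fst v" "snd w = snd v + 1" | (W) "fst w = fst v" "snd v = snd w + 1"
    | (N) "snd w = snd v" "fst w = fst v + 1" | (S) "snd w = snd v" "fst v = fst w + 1"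
  using assms unfolding grid_adj_def by auto

lemma centre_diff:
  assumes "grid_adj v w"
  shows "grid_centre a b w - grid_centre a b v = cis (of_int (code v w) * pi / 2) * b"
  using assms
proof (cases rule: grid_adj_cases)
  case E then show ?thesis by (simp add: grid_centre_def code_def algebra_simps)
next
  case W
  then have c: "code v w = 2" by (simp add: code_def)
  have "cis (of_int 2 * pi / 2) = -1" by simp
  then show ?thesis using W unfolding c by (simp add: grid_centre_def algebra_simps)
next
  case N
  then have c: "code v w = 1" by (simp add: code_def)
  then show ?thesis using N by (simp add: grid_centre_def algebra_simps)
next
  case S
  then have c: "code v w = -1" by (simp add: code_def)
  have "cis (of_int (-1) * pi / 2) = -\<i>" by simp
  then show ?thesis using S unfolding c by (simp add: grid_centre_def algebra_simps)
qed

lemma link_cis: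
  assumes b: "b \<noteq> 0" and adj: "grid_adj v w"
  shows "cis (link_pos (grid_centre a b) v w) = cis (Arg b + of_int (code v w) * pi / 2)"
proof -
  define \<theta> where "\<theta> = of_int (code v w) * pi / 2"
  have "link_pos (grid_centre a b) v w = Arg (cis \<theta> * b)"
    unfolding link_pos_def centre_diff[OF adj] \<theta>_def ..
  moreover have "cis (Arg (cis \<theta> * b)) = sgn (cis \<theta> * b)" using b by (intro cis_Arg) simp
  moreover have "sgn (cis \<theta> * b) = cis \<theta> * cis (Arg b)" using b by (simp add: sgn_mult cis_Arg)
  moreover have "cis \<theta> * cis (Arg b) = cis (Arg b + \<theta>)" by (simp add: cis_mult add.commute)
  ultimately show ?thesis unfolding \<theta>_def by simp
qed

lemma at_link:
  assumes "b \<noteq> 0" "grid_adj v w"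
  shows "at_pos f g v t (link_pos (grid_centre a b) v w) \<longleftrightarrow> rc4 (Xv f g b v t) (of_int (code v w))"
  unfolding at_pos_cis link_cis[OF assms] Xv_eq[of f v g t b] cis_rc4 ..

lemma rc4_refl: "rc4 x x" unfolding rc4_def by (rule exI[of _ 0]) simp
lemma rc4_sym: "rc4 x y \<Longrightarrow> rc4 y x"
proof -
  assume "rc4 x y"
  then obtain k :: int where "x = y + 4 * of_int k" unfolding rc4_def by blast
  then have "y = x + 4 * of_int (-k)" by simp
  then show "rc4 y x" unfolding rc4_def by blast
qed
lemma rc4_trans: "rc4 x y \<Longrightarrow> rc4 y z \<Longrightarrow> rc4 x z"
proof -
  assume "rc4 x y" "rc4 y z"
  then obtain k l :: int where "x = y + 4 * of_int k" "y = z + 4 * of_int l" unfolding rc4_def by blast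
  then have "x = z + 4 * of_int (k + l)" by (simp add: algebra_simps)
  then show "rc4 x z" unfolding rc4_def by blast
qed
lemma rc4_int: "rc4 (of_int a) (of_int c) \<longleftrightarrow> a mod 4 = c mod 4"
proof
  assume "rc4 (of_int a) (of_int c)"
  then obtain k :: int where "(of_int a :: real) = of_int c + 4 * of_int k" unfolding rc4_def by blast
  then have "(of_int a :: real) = of_int (c + 4 * k)" by simp
  then have "a = c + 4 * k" by (simp only: of_int_eq_iff)
  then show "a mod 4 = c mod 4" by simp
next
  assume "a mod 4 = c mod 4"
  then have "4 dvd (a - c)" by (simp add: mod_eq_dvd_iff)
  then obtain k where "a - c = 4 * k" by (elim dvdE)
  then have "(of_int a :: real) = of_int c + 4 * of_int k" by (simp add: algebra_simps flip: of_int_mult of_int_add)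
  then show "rc4 (of_int a) (of_int c)" unfolding rc4_def by blast
qed

lemma in_grid: "v \<in> grid n m \<longleftrightarrow> fst v < n \<and> snd v < m"
  by (cases v) (simp add: grid_def)

lemma st_fw: "fw e p x \<Longrightarrow> x + 1 < M \<Longrightarrow> st M p e x = x + 1"
  by (simp add: st_def)
lemma st_bw: "bw e p x \<Longrightarrow> 1 \<le> x \<Longrightarrow> st M p e x = x - 1"
  using fw_bw by (auto simp: st_def)
lemma st_eq_suc: "st M p e x = x + 1 \<Longrightarrow> fw e p x"
  using st_cases[of e p x M] by auto
lemma st_eq_pred: "st M p e x = x - 1 \<Longrightarrow> 1 \<le> x \<Longrightarrow> bw e p x"
  using st_cases[of e p x M] by auto
lemma par_flip: assumes "e mod 2 = p mod 2" shows "(1 - p) mod 2 \<noteq> (e::int) mod 2"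
proof
  assume "(1 - p) mod 2 = e mod 2"
  then have "even ((1 - p) - e)" by (simp add: mod2_iff)
  moreover obtain k where "e - p = 2 * k" using assms mod2_iff by (metis evenE)
  ultimately have "even (2 * (- p - k) + 1)" by (simp add: algebra_simps)
  then show False by simp
qed
lemma fw_other: "fw e p x \<Longrightarrow> (1 - p) mod 2 \<noteq> e mod 2"
  using fw_act par_flip by blast
lemma bw_other: "bw e p x \<Longrightarrow> (1 - p) mod 2 \<noteq> e mod 2"
  using bw_act par_flip by blast

lemma stepE: assumes "snd v + 1 < m" shows "step n m e v = (fst v, snd v + 1) \<longleftrightarrow> fw e 0 (snd v)"
proof
  assume "step n m e v = (fst v, snd v + 1)"
  then have "st m 0 e (snd v) = snd v + 1" by (simp add: step_def)
  then show "fw e 0 (snd v)" by (rule st_eq_suc)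
next
  assume h: "fw e 0 (snd v)"
  have "e mod 2 \<noteq> 1 mod 2" using fw_other[OF h] by simp
  then have "st n 1 e (fst v) = fst v" by (rule st_inactive)
  then show "step n m e v = (fst v, snd v + 1)" using st_fw[OF h assms] by (simp add: step_def)
qed

lemma stepW: assumes "1 \<le> snd v" shows "step n m e v = (fst v, snd v - 1) \<longleftrightarrow> bw e 0 (snd v)"
proof
  assume "step n m e v = (fst v, snd v - 1)"
  then have "st m 0 e (snd v) = snd v - 1" by (simp add: step_def)
  then show "bw e 0 (snd v)" using st_eq_pred assms by blast
next
  assume h: "bw e 0 (snd v)"
  have "e mod 2 \<noteq> 1 mod 2" using bw_other[OF h] by simp
  then have "st n 1 e (fst v) = fst v" by (rule st_inactive)
  then show "step n m e v = (fst v, snd v - 1)" using st_bw[OF h assms] by (simp add: step_def)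
qed

lemma stepN: assumes "fst v + 1 < n" shows "step n m e v = (fst v + 1, snd v) \<longleftrightarrow> fw e 1 (fst v)"
proof
  assume "step n m e v = (fst v + 1, snd v)"
  then have "st n 1 e (fst v) = fst v + 1" by (simp add: step_def)
  then show "fw e 1 (fst v)" by (rule st_eq_suc)
next
  assume h: "fw e 1 (fst v)"
  have "e mod 2 \<noteq> 0 mod 2" using fw_other[OF h] by simp
  then have "st m 0 e (snd v) = snd v" by (rule st_inactive)
  then show "step n m e v = (fst v + 1, snd v)" using st_fw[OF h assms] by (simp add: step_def)
qed

lemma stepS: assumes "1 \<le> fst v" shows "step n m e v = (fst v - 1, snd v) \<longleftrightarrow> bw e 1 (fst v)"
proof
  assume "step n m e v = (fst v - 1, snd v)"
  then have "st n 1 e (fst v) = fst v - 1" by (simp add: step_def)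
  then show "bw e 1 (fst v)" using st_eq_pred assms by blast
next
  assume h: "bw e 1 (fst v)"
  have "e mod 2 \<noteq> 0 mod 2" using bw_other[OF h] by simp
  then have "st m 0 e (snd v) = snd v" by (rule st_inactive)
  then show "step n m e v = (fst v - 1, snd v)" using st_bw[OF h assms] by (simp add: step_def)
qed

lemma mod4_dvd: "0 \<le> c \<Longrightarrow> c < 4 \<Longrightarrow> (x::int) mod 4 = c \<longleftrightarrow> 4 dvd (x - c)"
  using mod_eq_dvd_iff[of x 4 c] by simp
lemma dvd4_sh: assumes "b = a + k * 4" shows "(4 dvd b \<longleftrightarrow> 4 dvd (a::int))"
  unfolding assms by (rule dvd_add_times_triv_right_iff)
lemma dvd4_shn: assumes "b = - a + k * 4" shows "(4 dvd b \<longleftrightarrow> 4 dvd (a::int))"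
proof -
  have "4 dvd b \<longleftrightarrow> 4 dvd (- a)" unfolding assms by (rule dvd_add_times_triv_right_iff)
  then show ?thesis by simp
qed
lemma isg_cases: "isg k = 1 \<and> even k \<or> isg k = -1 \<and> odd k"
  unfolding isg_def by auto

lemma ipE: "(isg k * e + 2*int c) mod 4 = 0 \<longleftrightarrow> fw e 0 c"
proof -
  have "4 dvd (isg k * e + 2*int c - 0) \<longleftrightarrow> 4 dvd (e - 2 * int c - 0)"
  proof (cases "isg k = 1")
    case True then show ?thesis by (intro dvd4_sh[where k = "int c"]) simp
  next
    case False then have "isg k = -1" using isg_cases[of k] by auto
    then show ?thesis by (intro dvd4_shn[where k = 0]) simp
  qed
  then show ?thesis unfolding fw_def using mod4_dvd[of 0 "isg k * e + 2*int c"] by simp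
qed

lemma ipW: "(isg k * e + 2*int c) mod 4 = 2 \<longleftrightarrow> bw e 0 c"
proof -
  have "4 dvd (isg k * e + 2*int c - 2) \<longleftrightarrow> 4 dvd (e - 2 * int c - 2 - 0)"
  proof (cases "isg k = 1")
    case True then show ?thesis by (intro dvd4_sh[where k = "int c"]) simp
  next
    case False then have "isg k = -1" using isg_cases[of k] by auto
    then show ?thesis by (intro dvd4_shn[where k = "-1"]) simp
  qed
  then show ?thesis unfolding bw_def using mod4_dvd[of 2 "isg k * e + 2*int c"] by simp
qed

lemma ipN: "(isg (r + c) * e + 2*int c) mod 4 = 1 \<longleftrightarrow> fw e 1 r"
proof -
  have "4 dvd (isg (r + c) * e + 2*int c - 1) \<longleftrightarrow> 4 dvd (e - 2 * int r - 1)"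
  proof (cases "even (r + c)")
    case True
    then obtain k where k: "r + c = 2 * k" by (elim evenE)
    then have k': "int c = 2 * int k - int r" by simp
    have "isg (r + c) = 1" using True by (simp add: isg_def)
    then show ?thesis by (intro dvd4_sh[where k = "int k"]) (simp add: k' algebra_simps)
  next
    case False
    then obtain k where k: "r + c = 2 * k + 1" by (elim oddE)
    then have k': "int c = 2 * int k + 1 - int r" by simp
    have "isg (r + c) = -1" using False by (simp add: isg_def)
    then show ?thesis by (intro dvd4_shn[where k = "int k - int r"]) (simp add: k' algebra_simps)
  qed
  then show ?thesis unfolding fw_def using mod4_dvd[of 1 "isg (r + c) * e + 2*int c"] by simp
qed

lemma ipS: "(isg (r + c) * e + 2*int c) mod 4 = 3 \<longleftrightarrow> bw e 1 r"
proof -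
  have "4 dvd (isg (r + c) * e + 2*int c - 3) \<longleftrightarrow> 4 dvd (e - 2 * int r - 2 - 1)"
  proof (cases "even (r + c)")
    case True
    then obtain k where k: "r + c = 2 * k" by (elim evenE)
    then have k': "int c = 2 * int k - int r" by simp
    have "isg (r + c) = 1" using True by (simp add: isg_def)
    then show ?thesis by (intro dvd4_sh[where k = "int k"]) (simp add: k' algebra_simps)
  next
    case False
    then obtain k where k: "r + c = 2 * k + 1" by (elim oddE)
    then have k': "int c = 2 * int k + 1 - int r" by simp
    have "isg (r + c) = -1" using False by (simp add: isg_def)
    then show ?thesis by (intro dvd4_shn[where k = "int k - int r - 1"]) (simp add: k' algebra_simps)
  qed
  then show ?thesis unfolding bw_def using mod4_dvd[of 3 "isg (r + c) * e + 2*int c"] by simp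
qed

lemma IPall:
  assumes v: "v \<in> grid n m" and w: "w \<in> grid n m" and adj: "grid_adj v w"
  shows "(isg (fst v + snd v) * e + 2 * int (snd v)) mod 4 = code v w mod 4 \<longleftrightarrow> step n m e v = w"
  using adj
proof (cases rule: grid_adj_cases)
  case E
  then have w': "w = (fst v, snd v + 1)" by (metis prod.collapse)
  have c: "code v w = 0" using E by (simp add: code_def)
  have "snd v + 1 < m" using w E by (simp add: in_grid)
  then show ?thesis unfolding c using stepE[OF \<open>snd v + 1 < m\<close>, of n e] ipE[of "fst v + snd v" e "snd v"] w' by simp
next
  case W
  then have w': "w = (fst v, snd v - 1)" by (metis prod.collapse diff_add_inverse2)
  have c: "code v w = 2" using W by (simp add: code_def)
  have "1 \<le> snd v" using W by simp
  then show ?thesis unfolding c using stepW[OF \<open>1 \<le> snd v\<close>, of n m e] ipW[of "fst v + snd v" e "snd v"] w' by simp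
next
  case N
  then have w': "w = (fst v + 1, snd v)" by (metis prod.collapse)
  have c: "code v w = 1" using N by (simp add: code_def)
  have "fst v + 1 < n" using w N by (simp add: in_grid)
  then show ?thesis unfolding c using stepN[OF \<open>fst v + 1 < n\<close>, of m e] ipN[of "fst v" "snd v" e] w' by simp
next
  case S
  then have w': "w = (fst v - 1, snd v)" by (metis prod.collapse diff_add_inverse2)
  have c: "code v w = -1" using S by (simp add: code_def)
  have "1 \<le> fst v" using S by simp
  have m3: "(-1::int) mod 4 = 3" by simp
  show ?thesis unfolding c m3 using stepS[OF \<open>1 \<le> fst v\<close>, of n m e] ipS[of "fst v" "snd v" e] w' by simp
qed

lemma step_grid: "v \<in> grid n m \<Longrightarrow> step n m e v \<in> grid n m"
  by (simp add: in_grid step_def st_lt)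

lemma step_share: "fst (step n m e v) = fst v \<or> snd (step n m e v) = snd v"
proof (cases "st m 0 e (snd v) = snd v")
  case True then show ?thesis by (simp add: step_def)
next
  case False
  then have "e mod 2 = 0 mod 2" by (rule st_changed)
  then have "e mod 2 \<noteq> 1 mod 2" by simp
  then show ?thesis by (simp add: step_def st_inactive)
qed

lemma st_cases2: "st M p e x = x + 1 \<or> (st M p e x = x - 1 \<and> 1 \<le> x) \<or> st M p e x = x"
  using st_cases[of e p x M] by auto

lemma step_adj: assumes "step n m e v \<noteq> v" shows "grid_adj v (step n m e v)"
proof (cases "st m 0 e (snd v) = snd v")
  case True
  then have "st n 1 e (fst v) \<noteq> fst v" using assms by (metis prod.collapse step_def)
  then show ?thesis using True st_cases2[of n 1 e "fst v"] unfolding grid_adj_def step_def by auto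
next
  case False
  then have "e mod 2 = 0 mod 2" by (rule st_changed)
  then have "e mod 2 \<noteq> 1 mod 2" by simp
  then have "st n 1 e (fst v) = fst v" by (rule st_inactive)
  then show ?thesis using False st_cases2[of m 0 e "snd v"] unfolding grid_adj_def step_def by auto
qed

lemma grid_adj_ne: "grid_adj v w \<Longrightarrow> v \<noteq> w"
  unfolding grid_adj_def by auto

lemma step_sym:
  assumes v: "v \<in> grid n m" and w: "w \<in> grid n m" and sw: "step n m e v = w" and ne: "w \<noteq> v"
  shows "step n m e w = v"
proof -
  have adj: "grid_adj v w" using step_adj ne sw by blast
  then have adj': "grid_adj w v" unfolding grid_adj_def by auto
  have "(isg (fst v + snd v) * e + 2 * int (snd v)) mod 4 = code v w mod 4"
    using IPall[OF v w adj] sw by simp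
  show ?thesis
    using adj
  proof (cases rule: grid_adj_cases)
    case E
    then have w': "w = (fst v, snd v + 1)" by (metis prod.collapse)
    have "snd v + 1 < m" using w E by (simp add: in_grid)
    have "fw e 0 (snd v)" using stepE[OF \<open>snd v + 1 < m\<close>, of n e] sw w' by simp
    then have "bw e 0 (snd w)" using fw_suc E by simp
    then have "step n m e w = (fst w, snd w - 1)" using stepW[of w n m e] E by simp
    then show ?thesis using E by (simp add: prod_eq_iff)
  next
    case W
    have "1 \<le> snd v" using W by simp
    have w': "w = (fst v, snd v - 1)" using W by (metis prod.collapse diff_add_inverse2)
    have "bw e 0 (snd v)" using stepW[OF \<open>1 \<le> snd v\<close>, of n m e] sw w' by simp
    then have "fw e 0 (snd w)" using suc_bw W by (metis Suc_eq_plus1)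
    moreover have "snd w + 1 < m" using v W by (simp add: in_grid)
    ultimately have "step n m e w = (fst w, snd w + 1)" using stepE by blast
    then show ?thesis using W by (simp add: prod_eq_iff)
  next
    case N
    then have w': "w = (fst v + 1, snd v)" by (metis prod.collapse)
    have "fst v + 1 < n" using w N by (simp add: in_grid)
    have "fw e 1 (fst v)" using stepN[OF \<open>fst v + 1 < n\<close>, of m e] sw w' by simp
    then have "bw e 1 (fst w)" using fw_suc N by simp
    then have "step n m e w = (fst w - 1, snd w)" using stepS[of w n m e] N by simp
    then show ?thesis using N by (simp add: prod_eq_iff)
  next
    case S
    have "1 \<le> fst v" using S by simp
    have w': "w = (fst v - 1, snd v)" using S by (metis prod.collapse diff_add_inverse2)
    have "bw e 1 (fst v)" using stepS[OF \<open>1 \<le> fst v\<close>, of n m e] sw w' by simp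
    then have "fw e 1 (fst w)" using suc_bw S by (metis Suc_eq_plus1)
    moreover have "fst w + 1 < n" using v S by (simp add: in_grid)
    ultimately have "step n m e w = (fst w + 1, snd w)" using stepN by blast
    then show ?thesis using S by (simp add: prod_eq_iff)
  qed
qed

lemma isg_sq: "of_int (isg k) * of_int (isg k) = (1::real)" by (simp add: isg_def)
lemma isg_sq_int: "isg k * isg k = 1" by (simp add: isg_def)
lemma isg_Suc: "isg (Suc k) = - isg k" by (simp add: isg_def)

lemma rc4_lin: "rc4 x y \<Longrightarrow> rc4 (a - x) (a - y)"
proof -
  assume "rc4 x y"
  then obtain k :: int where "x = y + 4 * of_int k" unfolding rc4_def by blast
  then have "a - x = (a - y) + 4 * of_int (-k)" by simp
  then show ?thesis unfolding rc4_def by blast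
qed

lemma rc4_shift: "x - y = 4 * of_int k \<Longrightarrow> rc4 x y"
  unfolding rc4_def by (rule exI[of _ k]) simp

lemma BR:
  assumes b: "b \<noteq> 0"
    and F: "\<And>v. v \<in> grid n m \<Longrightarrow> rc4 (Xv f g b v t) (of_int (isg (fst v + snd v)) * \<psi> + 2 * of_nat (snd v))"
    and v: "v \<in> grid n m" and w: "w \<in> grid n m"
  shows "(grid_adj v w \<and> at_pos f g v t (link_pos (grid_centre a b) v w)) \<longleftrightarrow>
         (\<exists>e::int. \<psi> = of_int e \<and> step n m e v = w \<and> w \<noteq> v)"
proof
  assume h: "grid_adj v w \<and> at_pos f g v t (link_pos (grid_centre a b) v w)"
  define \<sigma> where "\<sigma> = isg (fst v + snd v)"
  define c where "c = snd v"
  have r1: "rc4 (Xv f g b v t) (of_int (code v w))" using at_link[OF b] h by blast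
  have r2: "rc4 (Xv f g b v t) (of_int \<sigma> * \<psi> + 2 * of_nat c)" using F[OF v] unfolding \<sigma>_def c_def .
  have "rc4 (of_int \<sigma> * \<psi> + 2 * of_nat c) (of_int (code v w))"
    by (rule rc4_trans[OF rc4_sym[OF r2] r1])
  then obtain k :: int where k: "of_int \<sigma> * \<psi> + 2 * of_nat c = of_int (code v w) + 4 * of_int k"
    unfolding rc4_def by blast
  define e where "e = \<sigma> * (code v w + 4 * k - 2 * int c)"
  have "\<psi> = (of_int \<sigma> * of_int \<sigma>) * \<psi>" using isg_sq unfolding \<sigma>_def by simp
  also have "\<dots> = of_int \<sigma> * (of_int \<sigma> * \<psi>)" by (simp only: mult.assoc)
  also have "of_int \<sigma> * \<psi> = of_int (code v w + 4 * k - 2 * int c)" using k by simp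
  finally have pe: "\<psi> = of_int e" unfolding e_def by simp
  have "\<sigma> * e = (\<sigma> * \<sigma>) * (code v w + 4 * k - 2 * int c)" unfolding e_def by (simp only: mult.assoc)
  also have "\<sigma> * \<sigma> = 1" unfolding \<sigma>_def by (rule isg_sq_int)
  finally have "\<sigma> * e + 2 * int c = code v w + 4 * k" by simp
  then have "(\<sigma> * e + 2 * int c) mod 4 = code v w mod 4" by simp
  then have "step n m e v = w" using IPall[OF v w] h unfolding \<sigma>_def c_def by blast
  moreover have "w \<noteq> v" using grid_adj_ne h by metis
  ultimately show "\<exists>e::int. \<psi> = of_int e \<and> step n m e v = w \<and> w \<noteq> v" using pe by blast
next
  assume "\<exists>e::int. \<psi> = of_int e \<and> step n m e v = w \<and> w \<noteq> v"
  then obtain e :: int where pe: "\<psi> = of_int e" and sw: "step n m e v = w" and ne: "w \<noteq> v" by blast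
  have adj: "grid_adj v w" using step_adj ne sw by blast
  define \<sigma> where "\<sigma> = isg (fst v + snd v)"
  have "(\<sigma> * e + 2 * int (snd v)) mod 4 = code v w mod 4" using IPall[OF v w adj] sw unfolding \<sigma>_def by blast
  then have "rc4 (of_int (\<sigma> * e + 2 * int (snd v))) (of_int (code v w))" using rc4_int by blast
  moreover have "(of_int (\<sigma> * e + 2 * int (snd v)) :: real) = of_int \<sigma> * \<psi> + 2 * of_nat (snd v)"
    using pe by simp
  ultimately have "rc4 (of_int \<sigma> * \<psi> + 2 * of_nat (snd v)) (of_int (code v w))" by (simp only:)
  then have "rc4 (Xv f g b v t) (of_int (code v w))" using rc4_trans[OF F[OF v]] unfolding \<sigma>_def by blast
  then show "grid_adj v w \<and> at_pos f g v t (link_pos (grid_centre a b) v w)" using at_link[OF b adj] adj by blast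
qed

lemma sync_g: "sync_schedule V cen r f g \<Longrightarrow> v \<in> V \<Longrightarrow> g v = 1 \<or> g v = -1"
  unfolding sync_schedule_def by blast

lemma sync_adj: "sync_schedule V cen r f g \<Longrightarrow> comm_adj V cen r v w \<Longrightarrow>
   g v = - g w \<and> (\<forall>t. at_pos f g v t (link_pos cen v w) \<longleftrightarrow> at_pos f g w t (link_pos cen w v))"
  unfolding sync_schedule_def by blast

lemma code_sum: "grid_adj v w \<Longrightarrow> code v w + code w v = (if fst v = fst w then 2 else 0)"
  unfolding grid_adj_def code_def by auto

lemma sync_pair:
  assumes b: "b \<noteq> 0"
    and adjG: "\<forall>v\<in>grid n m. \<forall>w\<in>grid n m. comm_adj (grid n m) (grid_centre a b) r v w \<longleftrightarrow> grid_adj v w"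
    and sync: "sync_schedule (grid n m) (grid_centre a b) r f g"
    and v: "v \<in> grid n m" and w: "w \<in> grid n m" and adj: "grid_adj v w"
  shows "rc4 (Xv f g b w t) (of_int (code v w + code w v) - Xv f g b v t)"
proof -
  have ca: "comm_adj (grid n m) (grid_centre a b) r v w" using adjG v w adj by blast
  have gw: "g v = - g w" and eqv: "\<And>t. at_pos f g v t (link_pos (grid_centre a b) v w) \<longleftrightarrow>
      at_pos f g w t (link_pos (grid_centre a b) w v)" using sync_adj[OF sync ca] by blast+
  have adj': "grid_adj w v" using adj unfolding grid_adj_def by auto
  have gv: "g v \<noteq> 0" using sync_g[OF sync v] by auto
  define t0 where "t0 = (of_int (code v w) * pi / 2 + Arg b - f v) / (g v * 2 * pi)"
  have "g v * 2 * pi * t0 = of_int (code v w) * pi / 2 + Arg b - f v" unfolding t0_def using gv by simp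
  then have X0: "Xv f g b v t0 = of_int (code v w)" unfolding Xv_def by (simp add: field_simps)
  have "at_pos f g v t0 (link_pos (grid_centre a b) v w)" using at_link[OF b adj] X0 rc4_refl by simp
  then have "at_pos f g w t0 (link_pos (grid_centre a b) w v)" using eqv by blast
  then have r: "rc4 (Xv f g b w t0) (of_int (code w v))" using at_link[OF b adj'] by blast
  define C where "C = (f v + f w - 2 * Arg b) * 2 / pi"
  have sumC: "Xv f g b v s + Xv f g b w s = C" for s unfolding Xv_def C_def using gw by (simp add: field_simps)
  have "Xv f g b w t0 = C - of_int (code v w)" using sumC[of t0] X0 by simp
  with r obtain k :: int where k: "C - of_int (code v w) = of_int (code w v) + 4 * of_int k"
    unfolding rc4_def by auto
  have "Xv f g b w t - (of_int (code v w + code w v) - Xv f g b v t) = 4 * of_int k"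
    using sumC[of t] k by simp
  then show ?thesis by (rule rc4_shift)
qed

lemma formula:
  assumes b: "b \<noteq> 0"
    and adjG: "\<forall>v\<in>grid n m. \<forall>w\<in>grid n m. comm_adj (grid n m) (grid_centre a b) r v w \<longleftrightarrow> grid_adj v w"
    and sync: "sync_schedule (grid n m) (grid_centre a b) r f g"
    and v: "v \<in> grid n m"
  shows "rc4 (Xv f g b v t) (of_int (isg (fst v + snd v)) * Xv f g b (0,0) t + 2 * of_nat (snd v))"
proof -
  let ?X = "\<lambda>v. Xv f g b v t"
  have row0: "rc4 (?X (0, c)) (of_int (isg c) * ?X (0,0) + 2 * of_nat c)" if "c < m" "0 < n" for c
    using that
  proof (induction c)
    case 0 then show ?case by (simp add: isg_def rc4_refl)
  next
    case (Suc c)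
    have g1: "(0, c) \<in> grid n m" "(0, Suc c) \<in> grid n m" using Suc.prems by (auto simp: grid_def)
    have adj: "grid_adj (0, c) (0, Suc c)" by (simp add: grid_adj_def)
    have "rc4 (?X (0, Suc c)) (of_int (code (0, c) (0, Suc c) + code (0, Suc c) (0, c)) - ?X (0, c))"
      by (rule sync_pair[OF b adjG sync g1 adj])
    then have r1: "rc4 (?X (0, Suc c)) (2 - ?X (0, c))" using code_sum[OF adj] by simp
    have r2: "rc4 (2 - ?X (0, c)) (2 - (of_int (isg c) * ?X (0,0) + 2 * of_nat c))"
      using rc4_lin Suc by simp
    have r3: "rc4 (2 - (of_int (isg c) * ?X (0,0) + 2 * of_nat c)) (of_int (isg (Suc c)) * ?X (0,0) + 2 * of_nat (Suc c))"
      by (rule rc4_shift[of _ _ "- int c"]) (simp add: isg_Suc algebra_simps)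
    show ?case using rc4_trans[OF r1 rc4_trans[OF r2 r3]] .
  qed
  have gen: "rc4 (?X (r', c)) (of_int (isg (r' + c)) * ?X (0,0) + 2 * of_nat c)" if "r' < n" "c < m" for r' c
    using that
  proof (induction r')
    case 0 then show ?case using row0 by simp
  next
    case (Suc r')
    have g1: "(r', c) \<in> grid n m" "(Suc r', c) \<in> grid n m" using Suc.prems by (auto simp: grid_def)
    have adj: "grid_adj (r', c) (Suc r', c)" by (simp add: grid_adj_def)
    have "rc4 (?X (Suc r', c)) (of_int (code (r', c) (Suc r', c) + code (Suc r', c) (r', c)) - ?X (r', c))"
      by (rule sync_pair[OF b adjG sync g1 adj])
    then have r1: "rc4 (?X (Suc r', c)) (0 - ?X (r', c))" using code_sum[OF adj] by simp
    have IH: "rc4 (?X (r', c)) (of_int (isg (r' + c)) * ?X (0,0) + 2 * of_nat c)" using Suc by simp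
    have r2: "rc4 (0 - ?X (r', c)) (0 - (of_int (isg (r' + c)) * ?X (0,0) + 2 * of_nat c))"
      by (rule rc4_lin[OF IH])
    have r3: "rc4 (0 - (of_int (isg (r' + c)) * ?X (0,0) + 2 * of_nat c)) (of_int (isg (Suc r' + c)) * ?X (0,0) + 2 * of_nat c)"
      by (rule rc4_shift[of _ _ "- int c"]) (simp add: isg_Suc algebra_simps)
    show ?case using rc4_trans[OF r1 rc4_trans[OF r2 r3]] .
  qed
  show ?thesis using gen[of "fst v" "snd v"] v by (simp add: in_grid)
qed

lemma events:
  fixes \<Psi>0 s :: real
  assumes s: "s = 1 \<or> s = -1"
  obtains \<tau>0 :: real and e0 si :: int where "\<tau>0 \<ge> 0" "si = 1 \<or> si = -1" "s = of_int si"
    "\<And>j. \<Psi>0 + 4*s*(\<tau>0 + real j / 4) = of_int (e0 + si * int j)"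
    "\<And>t e. t \<ge> 0 \<Longrightarrow> \<Psi>0 + 4*s*t = of_int e \<Longrightarrow> \<exists>j::nat. t = \<tau>0 + real j / 4"
proof (cases "s = 1")
  case True
  define e0 where "e0 = \<lceil>\<Psi>0\<rceil>"
  define \<tau>0 where "\<tau>0 = (of_int e0 - \<Psi>0) / 4"
  show ?thesis
  proof (rule that[of \<tau>0 1 e0])
    show "\<tau>0 \<ge> 0" unfolding \<tau>0_def e0_def by simp
    show "s = of_int 1" using True by simp
    show "\<Psi>0 + 4*s*(\<tau>0 + real j / 4) = of_int (e0 + 1 * int j)" for j
      unfolding \<tau>0_def using True by (simp add: field_simps)
    show "\<exists>j::nat. t = \<tau>0 + real j / 4" if "t \<ge> 0" "\<Psi>0 + 4*s*t = of_int e" for t e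
    proof -
      have "\<Psi>0 \<le> of_int e" using that True by simp
      then have "e0 \<le> e" unfolding e0_def by (simp add: ceiling_le_iff)
      then have "t = \<tau>0 + real (nat (e - e0)) / 4" using that True unfolding \<tau>0_def by (simp add: field_simps)
      then show ?thesis by blast
    qed
  qed simp
next
  case False
  then have sm: "s = -1" using s by simp
  define e0 where "e0 = \<lfloor>\<Psi>0\<rfloor>"
  define \<tau>0 where "\<tau>0 = (\<Psi>0 - of_int e0) / 4"
  show ?thesis
  proof (rule that[of \<tau>0 "-1" e0])
    show "\<tau>0 \<ge> 0" unfolding \<tau>0_def e0_def by simp
    show "s = of_int (-1)" using sm by simp
    show "\<Psi>0 + 4*s*(\<tau>0 + real j / 4) = of_int (e0 + (-1) * int j)" for j
      unfolding \<tau>0_def using sm by (simp add: field_simps)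
    show "\<exists>j::nat. t = \<tau>0 + real j / 4" if "t \<ge> 0" "\<Psi>0 + 4*s*t = of_int e" for t e
    proof -
      have "of_int e \<le> \<Psi>0" using that sm by simp
      then have "e \<le> e0" unfolding e0_def by (simp add: le_floor_iff)
      then have "t = \<tau>0 + real (nat (e0 - e)) / 4" using that sm unfolding \<tau>0_def by (simp add: field_simps)
      then show ?thesis by blast
    qed
  qed simp
qed

fun Qf :: "nat \<Rightarrow> nat \<Rightarrow> int \<Rightarrow> int \<Rightarrow> nat \<times> nat \<Rightarrow> nat \<Rightarrow> nat \<times> nat" where
  "Qf n m e0 si u 0 = u"
| "Qf n m e0 si u (Suc j) = step n m (e0 + si * int j) (Qf n m e0 si u j)"

lemma Qf_grid: "u \<in> grid n m \<Longrightarrow> Qf n m e0 si u j \<in> grid n m"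
  by (induction j) (auto simp: step_grid)


context
  fixes n m :: nat and a b :: complex and r :: real and f g :: "nat \<times> nat \<Rightarrow> real"
    and loc :: "nat \<times> nat \<Rightarrow> real \<Rightarrow> (nat \<times> nat) option"
    and \<tau>0 :: real and e0 si :: int
  assumes b: "b \<noteq> 0"
    and adjG: "\<forall>v\<in>grid n m. \<forall>w\<in>grid n m. comm_adj (grid n m) (grid_centre a b) r v w \<longleftrightarrow> grid_adj v w"
    and sync: "sync_schedule (grid n m) (grid_centre a b) r f g"
    and vr: "valid_run (grid n m) (grid_centre a b) r f g loc"
    and ev0: "si = 1 \<or> si = -1"
    and ev1: "\<tau>0 \<ge> 0"
    and ev2: "\<And>j. Xv f g b (0,0) (\<tau>0 + real j / 4) = of_int (e0 + si * int j)"
    and ev3: "\<And>t e. t \<ge> 0 \<Longrightarrow> Xv f g b (0,0) t = of_int e \<Longrightarrow> \<exists>j::nat. t = \<tau>0 + real j / 4"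
begin

lemma Fu: "v \<in> grid n m \<Longrightarrow> rc4 (Xv f g b v t) (of_int (isg (fst v + snd v)) * Xv f g b (0,0) t + 2 * of_nat (snd v))"
  by (rule formula[OF b adjG sync])

lemma BRu:
  assumes "v \<in> grid n m" "w \<in> grid n m"
  shows "(grid_adj v w \<and> at_pos f g v t (link_pos (grid_centre a b) v w)) \<longleftrightarrow>
         (\<exists>e::int. Xv f g b (0,0) t = of_int e \<and> step n m e v = w \<and> w \<noteq> v)"
  by (rule BR[OF b _ assms]) (rule Fu)

lemma ca_grid: "comm_adj (grid n m) (grid_centre a b) r i j \<Longrightarrow> i \<in> grid n m \<and> j \<in> grid n m \<and> grid_adj i j"
  using adjG unfolding comm_adj_def by blast

lemma noev_of:
  assumes "\<not> (\<exists>e::int. Xv f g b (0,0) t = of_int e)"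
  shows "noev (grid n m) (grid_centre a b) r f g t"
  unfolding noev_def
proof
  assume "\<exists>i j. comm_adj (grid n m) (grid_centre a b) r i j \<and> at_pos f g i t (link_pos (grid_centre a b) i j)"
  then obtain i j where h: "comm_adj (grid n m) (grid_centre a b) r i j" "at_pos f g i t (link_pos (grid_centre a b) i j)" by blast
  then have "i \<in> grid n m" "j \<in> grid n m" "grid_adj i j" using ca_grid by blast+
  then have "\<exists>e::int. Xv f g b (0,0) t = of_int e" using BRu h(2) by blast
  then show False using assms by blast
qed

lemma noev_between:
  assumes "\<tau>0 + real j / 4 < t" "t < \<tau>0 + real (Suc j) / 4"
  shows "noev (grid n m) (grid_centre a b) r f g t"
proof (rule noev_of, rule notI)
  assume "\<exists>e::int. Xv f g b (0,0) t = of_int e"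
  then obtain e :: int where "Xv f g b (0,0) t = of_int e" by blast
  moreover have "t \<ge> 0" using assms ev1 by (smt (verit) divide_nonneg_nonneg of_nat_0_le_iff)
  ultimately obtain i :: nat where "t = \<tau>0 + real i / 4" using ev3 by blast
  then have "real j < real i" "real i < real (Suc j)" using assms by auto
  then have "j < i" "i < Suc j" by (simp_all only: of_nat_less_iff)
  then show False by simp
qed

lemma noev_before:
  assumes "0 \<le> t" "t < \<tau>0"
  shows "noev (grid n m) (grid_centre a b) r f g t"
proof (rule noev_of, rule notI)
  assume "\<exists>e::int. Xv f g b (0,0) t = of_int e"
  then obtain e :: int where "Xv f g b (0,0) t = of_int e" by blast
  then obtain i :: nat where "t = \<tau>0 + real i / 4" using ev3 assms by blast
  then show False using assms by simp
qed

lemma starves_surv: "starves V cen r f g loc u \<Longrightarrow> survives V loc u"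
  unfolding starves_def by blast

lemma starves_rule: "starves V cen r f g loc u \<Longrightarrow> t \<ge> 0 \<Longrightarrow> leftval loc u t (Some i) \<Longrightarrow>
    comm_adj V cen r i j \<Longrightarrow> at_pos f g i t (link_pos cen i j) \<Longrightarrow> empty_before V loc t j"
  unfolding starves_def by blast

lemma ES:
  assumes u: "u \<in> grid n m" and stv: "starves (grid n m) (grid_centre a b) r f g loc u"
    and t: "t \<ge> 0" and pe: "Xv f g b (0,0) t = of_int e" and lv: "leftval loc u t (Some i)"
    and i: "i \<in> grid n m"
  shows "loc u t = Some (step n m e i)"
proof -
  have sv: "survives (grid n m) loc u" using starves_surv[OF stv] .
  then have "loc u t \<noteq> None" unfolding survives_def by blast
  note D = vr_rule[OF vr u t lv this]
  have uniq: "j = step n m e i" if h1: "comm_adj (grid n m) (grid_centre a b) r i j" and h2: "at_pos f g i t (link_pos (grid_centre a b) i j)" for j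
  proof -
    have "j \<in> grid n m" "grid_adj i j" using ca_grid h1 by blast+
    then obtain e' :: int where "Xv f g b (0,0) t = of_int e'" "step n m e' i = j" "j \<noteq> i"
      using BRu[OF i, of j t] h2 by blast
    then show ?thesis using pe by simp
  qed
  show ?thesis
  proof (cases "step n m e i = i")
    case True
    have "\<nexists>j. comm_adj (grid n m) (grid_centre a b) r i j \<and> at_pos f g i t (link_pos (grid_centre a b) i j)"
    proof
      assume "\<exists>j. comm_adj (grid n m) (grid_centre a b) r i j \<and> at_pos f g i t (link_pos (grid_centre a b) i j)"
      then obtain j where j: "comm_adj (grid n m) (grid_centre a b) r i j" "at_pos f g i t (link_pos (grid_centre a b) i j)" by blast
      then have "j = i" using uniq True by simp
      then show False using j(1) unfolding comm_adj_def by simp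
    qed
    then have "loc u t = Some i" using D by blast
    then show ?thesis using True by simp
  next
    case False
    define w where "w = step n m e i"
    have w: "w \<in> grid n m" unfolding w_def using step_grid i by blast
    have "grid_adj i w \<and> at_pos f g i t (link_pos (grid_centre a b) i w)"
      using BRu[OF i w, of t] pe False unfolding w_def by blast
    then have ca: "comm_adj (grid n m) (grid_centre a b) r i w" and ap: "at_pos f g i t (link_pos (grid_centre a b) i w)"
      using adjG i w by blast+
    have "empty_before (grid n m) loc t w" using starves_rule[OF stv t lv ca ap] .
    then have "\<exists>j. comm_adj (grid n m) (grid_centre a b) r i j \<and> at_pos f g i t (link_pos (grid_centre a b) i j) \<and> empty_before (grid n m) loc t j"
      using ca ap by blast
    then obtain j where j: "comm_adj (grid n m) (grid_centre a b) r i j" "at_pos f g i t (link_pos (grid_centre a b) i j)"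
      "loc u t = Some j" using D by blast
    then show ?thesis using uniq by simp
  qed
qed

lemma track:
  assumes u: "u \<in> grid n m" and stv: "starves (grid n m) (grid_centre a b) r f g loc u"
  shows "leftval loc u (\<tau>0 + real j / 4) (Some (Qf n m e0 si u j)) \<and>
         loc u (\<tau>0 + real j / 4) = Some (Qf n m e0 si u (Suc j))"
proof (induction j)
  case 0
  have sv: "survives (grid n m) loc u" using starves_surv[OF stv] .
  have neg: "leftval loc u 0 (Some u)"
    unfolding leftval_def by (rule exI[of _ 1]) (use vr_neg[OF vr u] in auto)
  have lv0: "leftval loc u \<tau>0 (Some u)"
  proof (cases "\<tau>0 = 0")
    case True then show ?thesis using neg by simp
  next
    case False
    then have pos: "0 < \<tau>0" using ev1 by simp
    have "noev (grid n m) (grid_centre a b) r f g 0" using noev_before pos by simp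
    then have "leftval loc u 0 (loc u 0)" using loc_noev[OF vr u sv] by blast
    then have l0: "loc u 0 = Some u" using leftval_unique neg by metis
    have "leftval loc u \<tau>0 (loc u 0)"
      by (rule leftval_end[OF vr u sv pos]) (use noev_before in auto)
    then show ?thesis using l0 by simp
  qed
  have "loc u \<tau>0 = Some (step n m (e0 + si * int 0) u)"
    using ES[OF u stv ev1 _ lv0 u] ev2[of 0] by simp
  then show ?case using lv0 by simp
next
  case (Suc j)
  have sv: "survives (grid n m) loc u" using starves_surv[OF stv] .
  have lt: "\<tau>0 + real j / 4 < \<tau>0 + real (Suc j) / 4" by simp
  have "leftval loc u (\<tau>0 + real (Suc j) / 4) (loc u (\<tau>0 + real j / 4))"
    by (rule leftval_end[OF vr u sv lt]) (use noev_between in auto)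
  then have lv: "leftval loc u (\<tau>0 + real (Suc j) / 4) (Some (Qf n m e0 si u (Suc j)))" using Suc by simp
  have t: "\<tau>0 + real (Suc j) / 4 \<ge> 0" using ev1 by simp
  have "loc u (\<tau>0 + real (Suc j) / 4) = Some (step n m (e0 + si * int (Suc j)) (Qf n m e0 si u (Suc j)))"
    using ES[OF u stv t ev2[of "Suc j"] lv Qf_grid[OF u]] .
  then show ?case using lv by simp
qed

lemma no_conflict:
  assumes u: "u \<in> grid n m" and w: "w \<in> grid n m"
    and su: "starves (grid n m) (grid_centre a b) r f g loc u"
    and sw: "starves (grid n m) (grid_centre a b) r f g loc w"
  shows "\<not> (step n m (e0 + si * int j) (Qf n m e0 si u j) = Qf n m e0 si w j \<and> Qf n m e0 si w j \<noteq> Qf n m e0 si u j)"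
proof
  assume h: "step n m (e0 + si * int j) (Qf n m e0 si u j) = Qf n m e0 si w j \<and> Qf n m e0 si w j \<noteq> Qf n m e0 si u j"
  define t where "t = \<tau>0 + real j / 4"
  have t0: "t \<ge> 0" unfolding t_def using ev1 by simp
  have qu: "Qf n m e0 si u j \<in> grid n m" and qw: "Qf n m e0 si w j \<in> grid n m" using Qf_grid u w by blast+
  have "grid_adj (Qf n m e0 si u j) (Qf n m e0 si w j) \<and> at_pos f g (Qf n m e0 si u j) t (link_pos (grid_centre a b) (Qf n m e0 si u j) (Qf n m e0 si w j))"
    using BRu[OF qu qw, of t] h ev2[of j] unfolding t_def by blast
  then have ca: "comm_adj (grid n m) (grid_centre a b) r (Qf n m e0 si u j) (Qf n m e0 si w j)"
    and ap: "at_pos f g (Qf n m e0 si u j) t (link_pos (grid_centre a b) (Qf n m e0 si u j) (Qf n m e0 si w j))"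
    using adjG qu qw by blast+
  have lu: "leftval loc u t (Some (Qf n m e0 si u j))" using track[OF u su] unfolding t_def by blast
  have "empty_before (grid n m) loc t (Qf n m e0 si w j)" using starves_rule[OF su t0 lu ca ap] .
  moreover have "leftval loc w t (Some (Qf n m e0 si w j))" using track[OF w sw] unfolding t_def by blast
  ultimately show False using w unfolding empty_before_def by blast
qed


lemma Qf_fst: "fst (Qf n m e0 si u (Suc j)) = st n 1 (e0 + si * int j) (fst (Qf n m e0 si u j))"
  by (simp add: step_def)
lemma Qf_snd: "snd (Qf n m e0 si u (Suc j)) = st m 0 (e0 + si * int j) (snd (Qf n m e0 si u j))"
  by (simp add: step_def)

lemma row_inj:
  assumes u: "u \<in> grid n m" and w: "w \<in> grid n m"
    and su: "starves (grid n m) (grid_centre a b) r f g loc u"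
    and sw: "starves (grid n m) (grid_centre a b) r f g loc w"
    and eq: "fst u = fst w"
  shows "u = w"
proof (rule ccontr)
  assume ne: "u \<noteq> w"
  then have ne2: "snd u \<noteq> snd w" using eq by (metis prod.collapse)
  let ?Q = "Qf n m e0 si"
  define ee where "ee j = e0 + si * int j" for j
  have rows: "fst (?Q u j) = fst (?Q w j)" for j
    by (induction j) (simp_all add: eq step_def)
  have x0: "snd u < m" "snd w < m" using u w by (simp_all add: in_grid)
  obtain j where j: "st m 0 (ee j) (snd (?Q u j)) = snd (?Q w j) \<or> st m 0 (ee j) (snd (?Q w j)) = snd (?Q u j)"
  proof -
    have es: "ee (Suc j) = ee j + si" for j unfolding ee_def by (simp add: algebra_simps)
    have xs: "snd (?Q u (Suc j)) = st m 0 (ee j) (snd (?Q u j))" for j unfolding ee_def by (rule Qf_snd)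
    have ys: "snd (?Q w (Suc j)) = st m 0 (ee j) (snd (?Q w j))" for j unfolding ee_def by (rule Qf_snd)
    show ?thesis using oneD[of ee si, OF es ev0, of "\<lambda>j. snd (?Q u j)" m 0 "\<lambda>j. snd (?Q w j)", OF xs ys] x0 ne2 that by auto
  qed
  have inv: "snd (?Q u j) \<noteq> snd (?Q w j)" for j
  proof (induction j)
    case 0 then show ?case using ne2 by simp
  next
    case (Suc j)
    have "snd (?Q u j) < m" "snd (?Q w j) < m" using Qf_grid u w by (auto simp: in_grid)
    then show ?case using Suc st_inj by (metis Qf_snd)
  qed
  have key: "step n m (ee j) (?Q x j) = ?Q y j \<and> ?Q y j \<noteq> ?Q x j"
    if "st m 0 (ee j) (snd (?Q x j)) = snd (?Q y j)" "fst (?Q x j) = fst (?Q y j)" "snd (?Q x j) \<noteq> snd (?Q y j)"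
    for x y
  proof -
    have "st m 0 (ee j) (snd (?Q x j)) \<noteq> snd (?Q x j)" using that by simp
    then have "ee j mod 2 = 0 mod 2" by (rule st_changed)
    then have "ee j mod 2 \<noteq> 1 mod 2" by simp
    then have "st n 1 (ee j) (fst (?Q x j)) = fst (?Q x j)" by (rule st_inactive)
    then have "step n m (ee j) (?Q x j) = ?Q y j" using that unfolding step_def by (simp add: prod_eq_iff)
    moreover have "?Q y j \<noteq> ?Q x j" using that(3) by auto
    ultimately show ?thesis by blast
  qed
  from j show False
  proof
    assume "st m 0 (ee j) (snd (?Q u j)) = snd (?Q w j)"
    then have "step n m (ee j) (?Q u j) = ?Q w j \<and> ?Q w j \<noteq> ?Q u j" using key rows inv by blast
    then show False using no_conflict[OF u w su sw, of j] unfolding ee_def by blast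
  next
    assume "st m 0 (ee j) (snd (?Q w j)) = snd (?Q u j)"
    then have "step n m (ee j) (?Q w j) = ?Q u j \<and> ?Q u j \<noteq> ?Q w j" using key rows inv by metis
    then show False using no_conflict[OF w u sw su, of j] unfolding ee_def by blast
  qed
qed

lemma col_inj:
  assumes u: "u \<in> grid n m" and w: "w \<in> grid n m"
    and su: "starves (grid n m) (grid_centre a b) r f g loc u"
    and sw: "starves (grid n m) (grid_centre a b) r f g loc w"
    and eq: "snd u = snd w"
  shows "u = w"
proof (rule ccontr)
  assume ne: "u \<noteq> w"
  then have ne2: "fst u \<noteq> fst w" using eq by (metis prod.collapse)
  let ?Q = "Qf n m e0 si"
  define ee where "ee j = e0 + si * int j" for j
  have cols: "snd (?Q u j) = snd (?Q w j)" for j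
    by (induction j) (simp_all add: eq step_def)
  have x0: "fst u < n" "fst w < n" using u w by (simp_all add: in_grid)
  obtain j where j: "st n 1 (ee j) (fst (?Q u j)) = fst (?Q w j) \<or> st n 1 (ee j) (fst (?Q w j)) = fst (?Q u j)"
  proof -
    have es: "ee (Suc j) = ee j + si" for j unfolding ee_def by (simp add: algebra_simps)
    have xs: "fst (?Q u (Suc j)) = st n 1 (ee j) (fst (?Q u j))" for j unfolding ee_def by (rule Qf_fst)
    have ys: "fst (?Q w (Suc j)) = st n 1 (ee j) (fst (?Q w j))" for j unfolding ee_def by (rule Qf_fst)
    show ?thesis using oneD[of ee si, OF es ev0, of "\<lambda>j. fst (?Q u j)" n 1 "\<lambda>j. fst (?Q w j)", OF xs ys] x0 ne2 that by auto
  qed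
  have inv: "fst (?Q u j) \<noteq> fst (?Q w j)" for j
  proof (induction j)
    case 0 then show ?case using ne2 by simp
  next
    case (Suc j)
    have "fst (?Q u j) < n" "fst (?Q w j) < n" using Qf_grid u w by (auto simp: in_grid)
    then show ?case using Suc st_inj by (metis Qf_fst)
  qed
  have key: "step n m (ee j) (?Q x j) = ?Q y j \<and> ?Q y j \<noteq> ?Q x j"
    if "st n 1 (ee j) (fst (?Q x j)) = fst (?Q y j)" "snd (?Q x j) = snd (?Q y j)" "fst (?Q x j) \<noteq> fst (?Q y j)"
    for x y
  proof -
    have "st n 1 (ee j) (fst (?Q x j)) \<noteq> fst (?Q x j)" using that by simp
    then have "ee j mod 2 = 1 mod 2" by (rule st_changed)
    then have "ee j mod 2 \<noteq> 0 mod 2" by simp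
    then have "st m 0 (ee j) (snd (?Q x j)) = snd (?Q x j)" by (rule st_inactive)
    then have "step n m (ee j) (?Q x j) = ?Q y j" using that unfolding step_def by (simp add: prod_eq_iff)
    moreover have "?Q y j \<noteq> ?Q x j" using that(3) by auto
    ultimately show ?thesis by blast
  qed
  from j show False
  proof
    assume "st n 1 (ee j) (fst (?Q u j)) = fst (?Q w j)"
    then have "step n m (ee j) (?Q u j) = ?Q w j \<and> ?Q w j \<noteq> ?Q u j" using key cols inv by blast
    then show False using no_conflict[OF u w su sw, of j] unfolding ee_def by blast
  next
    assume "st n 1 (ee j) (fst (?Q w j)) = fst (?Q u j)"
    then have "step n m (ee j) (?Q w j) = ?Q u j \<and> ?Q u j \<noteq> ?Q w j" using key cols inv by metis
    then show False using no_conflict[OF w u sw su, of j] unfolding ee_def by blast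
  qed
qed

lemma card_bound: "card {u \<in> grid n m. starves (grid n m) (grid_centre a b) r f g loc u} \<le> min n m"
proof -
  let ?S = "{u \<in> grid n m. starves (grid n m) (grid_centre a b) r f g loc u}"
  have "inj_on fst ?S" unfolding inj_on_def using row_inj by blast
  moreover have "fst ` ?S \<subseteq> {..<n}" by (auto simp: in_grid)
  ultimately have c1: "card ?S \<le> n" using card_inj_on_le[of fst ?S "{..<n}"] by simp
  have "inj_on snd ?S" unfolding inj_on_def using col_inj by blast
  moreover have "snd ` ?S \<subseteq> {..<m}" by (auto simp: in_grid)
  ultimately have c2: "card ?S \<le> m" using card_inj_on_le[of snd ?S "{..<m}"] by simp
  show ?thesis using c1 c2 by simp
qed

end

definition fL :: "complex \<Rightarrow> nat \<times> nat \<Rightarrow> real" where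
  "fL b v = Arg b + of_int (isg (fst v + snd v)) * (pi / 4) + of_nat (snd v) * pi"
definition gL :: "nat \<times> nat \<Rightarrow> real" where
  "gL v = of_int (isg (fst v + snd v))"

lemma XL: "Xv (fL b) gL b v t = of_int (isg (fst v + snd v)) * (1/2 + 4*t) + 2 * of_nat (snd v)"
  unfolding Xv_def fL_def gL_def by (simp add: field_simps)

lemma BRL:
  assumes b: "b \<noteq> 0" and v: "v \<in> grid n m" and w: "w \<in> grid n m"
  shows "(grid_adj v w \<and> at_pos (fL b) gL v t (link_pos (grid_centre a b) v w)) \<longleftrightarrow>
         (\<exists>e::int. 1/2 + 4*t = of_int e \<and> step n m e v = w \<and> w \<noteq> v)"
  by (rule BR[OF b _ v w]) (simp add: XL rc4_refl)

lemma adj_parity: "grid_adj v w \<Longrightarrow> isg (fst v + snd v) = - isg (fst w + snd w)"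
  unfolding grid_adj_def isg_def by auto

lemma syncL:
  assumes b: "b \<noteq> 0"
    and adjG: "\<forall>v\<in>grid n m. \<forall>w\<in>grid n m. comm_adj (grid n m) (grid_centre a b) r v w \<longleftrightarrow> grid_adj v w"
  shows "sync_schedule (grid n m) (grid_centre a b) r (fL b) gL"
  unfolding sync_schedule_def
proof (intro conjI ballI allI impI)
  fix v show "gL v = 1 \<or> gL v = -1" by (simp add: gL_def isg_def)
next
  fix v w assume ca: "comm_adj (grid n m) (grid_centre a b) r v w"
  then have v: "v \<in> grid n m" and w: "w \<in> grid n m" unfolding comm_adj_def by auto
  then have adj: "grid_adj v w" using adjG ca by blast
  then have adj': "grid_adj w v" unfolding grid_adj_def by auto
  show "gL v = - gL w" unfolding gL_def using adj_parity[OF adj] by simp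
  fix t
  show "at_pos (fL b) gL v t (link_pos (grid_centre a b) v w) \<longleftrightarrow> at_pos (fL b) gL w t (link_pos (grid_centre a b) w v)"
  proof
    assume "at_pos (fL b) gL v t (link_pos (grid_centre a b) v w)"
    then obtain e :: int where "1/2 + 4*t = of_int e" "step n m e v = w" "w \<noteq> v" using BRL[OF b v w] adj by blast
    moreover then have "step n m e w = v" using step_sym v w by blast
    ultimately show "at_pos (fL b) gL w t (link_pos (grid_centre a b) w v)" using BRL[OF b w v] by metis
  next
    assume "at_pos (fL b) gL w t (link_pos (grid_centre a b) w v)"
    then obtain e :: int where "1/2 + 4*t = of_int e" "step n m e w = v" "v \<noteq> w" using BRL[OF b w v] adj' by blast
    moreover then have "step n m e v = w" using step_sym v w by blast
    ultimately show "at_pos (fL b) gL v t (link_pos (grid_centre a b) v w)" using BRL[OF b v w] by metis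
  qed
qed

definition Dg :: "nat \<Rightarrow> nat \<Rightarrow> (nat \<times> nat) set" where
  "Dg n m = {v \<in> grid n m. fst v = snd v}"

definition NL :: "real \<Rightarrow> nat" where "NL t = nat \<lfloor>4*t + 1/2\<rfloor>"

definition locL :: "nat \<Rightarrow> nat \<Rightarrow> nat \<times> nat \<Rightarrow> real \<Rightarrow> (nat \<times> nat) option" where
  "locL n m u t = (if t < 0 then Some u else if u \<in> Dg n m then Some (Qf n m 1 1 u (NL t)) else None)"

lemma LV0: "t \<le> 0 \<Longrightarrow> leftval (locL n m) u t (Some u)"
  unfolding leftval_def locL_def by (rule exI[of _ 1]) auto

lemma LVd:
  assumes u: "u \<in> Dg n m" and t: "t \<ge> 0"
  shows "leftval (locL n m) u t (Some (Qf n m 1 1 u (nat (\<lceil>4*t + 1/2\<rceil> - 1))))"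
proof (cases "t = 0")
  case True
  have "\<lceil>4*t + 1/2\<rceil> = 1" using True by (simp add: ceiling_eq_iff)
  then show ?thesis using LV0[of t n m u] True by simp
next
  case False
  then have tp: "t > 0" using t by simp
  define c where "c = \<lceil>4*t + 1/2\<rceil>"
  have c1: "of_int c - 1 < 4*t + 1/2" "4*t + 1/2 \<le> of_int c" unfolding c_def by linarith+
  define \<epsilon> where "\<epsilon> = min t ((4*t + 1/2 - (of_int c - 1)) / 4)"
  have ep: "\<epsilon> > 0" unfolding \<epsilon>_def using tp c1 by simp
  show ?thesis unfolding leftval_def
  proof (intro exI[of _ \<epsilon>] conjI allI impI)
    show "\<epsilon> > 0" by (rule ep)
    fix s assume s: "t - \<epsilon> < s \<and> s < t"
    have m0: "\<epsilon> \<le> (4*t + 1/2 - (of_int c - 1)) / 4" unfolding \<epsilon>_def by (rule min.cobounded2)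
    have m1: "\<epsilon> \<le> t" "4 * \<epsilon> \<le> 4*t + 1/2 - (of_int c - 1)" using m0 unfolding \<epsilon>_def by auto
    have "s > 0" using s m1 by linarith
    moreover have "4*s + 1/2 > of_int c - 1" using s m1 by linarith
    moreover have "4*s + 1/2 < of_int c" using s c1 by linarith
    ultimately have "\<lfloor>4*s + 1/2\<rfloor> = c - 1" "\<not> s < 0" by (simp_all add: floor_eq_iff)
    then show "locL n m u s = Some (Qf n m 1 1 u (nat (\<lceil>4*t + 1/2\<rceil> - 1)))"
      unfolding locL_def NL_def c_def[symmetric] using u by simp
  qed
qed

lemma LVn:
  assumes u: "u \<notin> Dg n m" and t: "t > 0"
  shows "leftval (locL n m) u t None"
  unfolding leftval_def
proof (intro exI[of _ t] conjI allI impI)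
  show "t > 0" by (rule t)
  fix s assume "t - t < s \<and> s < t"
  then show "locL n m u s = None" unfolding locL_def using u by simp
qed

lemma right_const: "\<exists>\<epsilon>>0. \<forall>s. t \<le> s \<and> s < t + \<epsilon> \<longrightarrow> locL n m u s = locL n m u t"
proof (cases "t < 0")
  case True
  show ?thesis
    by (rule exI[of _ "-t"]) (use True in \<open>auto simp: locL_def\<close>)
next
  case False
  define c where "c = \<lfloor>4*t + 1/2\<rfloor>"
  have c1: "of_int c \<le> 4*t + 1/2" "4*t + 1/2 < of_int c + 1" unfolding c_def by linarith+
  define \<epsilon> where "\<epsilon> = (of_int c + 1 - (4*t + 1/2)) / 4"
  have ep: "\<epsilon> > 0" unfolding \<epsilon>_def using c1 by simp
  show ?thesis
  proof (intro exI[of _ \<epsilon>] conjI allI impI)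
    show "\<epsilon> > 0" by (rule ep)
    fix s assume s: "t \<le> s \<and> s < t + \<epsilon>"
    have e4: "4 * \<epsilon> = of_int c + 1 - (4*t + 1/2)" unfolding \<epsilon>_def by simp
    have "of_int c \<le> 4*s + 1/2" "4*s + 1/2 < of_int c + 1" using s c1 e4 by linarith+
    then have "\<lfloor>4*s + 1/2\<rfloor> = c" by (simp add: floor_eq_iff)
    then show "locL n m u s = locL n m u t" unfolding locL_def NL_def c_def[symmetric] using s False by simp
  qed
qed

lemma Dg_grid: "u \<in> Dg n m \<Longrightarrow> u \<in> grid n m" unfolding Dg_def by simp

lemma diag_inv:
  assumes u: "u \<in> Dg n m" and w: "w \<in> Dg n m" and ne: "u \<noteq> w"
  shows "fst (Qf n m e0 si u k) \<noteq> fst (Qf n m e0 si w k) \<and> snd (Qf n m e0 si u k) \<noteq> snd (Qf n m e0 si w k)"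
proof (induction k)
  case 0
  have "fst u \<noteq> fst w" "snd u \<noteq> snd w" using u w ne unfolding Dg_def by (auto simp: prod_eq_iff)
  then show ?case by simp
next
  case (Suc k)
  have g: "Qf n m e0 si u k \<in> grid n m" "Qf n m e0 si w k \<in> grid n m" using Qf_grid Dg_grid u w by blast+
  then have "fst (Qf n m e0 si u k) < n" "fst (Qf n m e0 si w k) < n" "snd (Qf n m e0 si u k) < m" "snd (Qf n m e0 si w k) < m"
    by (auto simp: in_grid)
  then show ?case using Suc st_inj unfolding Qf.simps step_def by (metis fst_conv snd_conv)
qed

lemma ev_facts:
  assumes t: "t \<ge> 0" and pe: "1/2 + 4*t = (of_int e :: real)"
  shows "e \<ge> 1" "t > 0" "\<lceil>4*t + 1/2\<rceil> = e" "NL t = Suc (nat (e - 1))" "1 + int (nat (e - 1)) = e"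
proof -
  have "(of_int e :: real) \<ge> 1/2" using t pe by simp
  then have "(of_int e :: real) > 0" by simp
  then show e1: "e \<ge> 1" by simp
  then have "(of_int e :: real) \<ge> 1" by simp
  then show "t > 0" using pe by simp
  have "4*t + 1/2 = of_int e" using pe by simp
  then show c: "\<lceil>4*t + 1/2\<rceil> = e" by simp
  have "\<lfloor>4*t + 1/2\<rfloor> = e" using \<open>4*t + 1/2 = of_int e\<close> by simp
  then show "NL t = Suc (nat (e - 1))" unfolding NL_def using e1 by simp
  show "1 + int (nat (e - 1)) = e" using e1 by simp
qed

lemma noint_ceil:
  assumes "\<not> (\<exists>e::int. 1/2 + 4*t = (of_int e :: real))"
  shows "\<lceil>4*t + 1/2\<rceil> - 1 = \<lfloor>4*t + 1/2\<rfloor>"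
proof -
  define x where "x = 4*t + 1/2"
  have "x \<noteq> of_int \<lfloor>x\<rfloor>" using assms unfolding x_def by (metis add.commute)
  then have "of_int \<lfloor>x\<rfloor> < x" "x < of_int \<lfloor>x\<rfloor> + 1" by (simp_all add: le_less) linarith
  then have "\<lceil>x\<rceil> = \<lfloor>x\<rfloor> + 1" by (simp add: ceiling_eq_iff)
  then show ?thesis unfolding x_def by simp
qed

lemma EB:
  assumes u: "u \<in> Dg n m" and t: "t > 0" and pe: "1/2 + 4*t = (of_int e :: real)"
    and ne: "step n m e (Qf n m 1 1 u (nat (e-1))) \<noteq> Qf n m 1 1 u (nat (e-1))"
  shows "empty_before (grid n m) (locL n m) t (step n m e (Qf n m 1 1 u (nat (e-1))))"
  unfolding empty_before_def
proof (intro ballI notI)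
  fix w' assume w': "w' \<in> grid n m" and lv: "leftval (locL n m) w' t (Some (step n m e (Qf n m 1 1 u (nat (e-1)))))"
  let ?k = "nat (e-1)"
  let ?w = "step n m e (Qf n m 1 1 u ?k)"
  show False
  proof (cases "w' \<in> Dg n m")
    case False
    then have "leftval (locL n m) w' t None" using LVn t by blast
    then show False using lv leftval_unique by fastforce
  next
    case True
    have c: "\<lceil>4*t + 1/2\<rceil> = e" using ev_facts[OF _ pe] t by simp
    have "leftval (locL n m) w' t (Some (Qf n m 1 1 w' ?k))" using LVd[OF True] t c by fastforce
    then have eq: "Qf n m 1 1 w' ?k = ?w" using lv leftval_unique by fastforce
    show False
    proof (cases "w' = u")
      case True then show False using eq ne by simp
    next
      case False
      have "fst (Qf n m 1 1 u ?k) \<noteq> fst (Qf n m 1 1 w' ?k) \<and> snd (Qf n m 1 1 u ?k) \<noteq> snd (Qf n m 1 1 w' ?k)"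
        using diag_inv[OF u True] False by metis
      moreover have "fst ?w = fst (Qf n m 1 1 u ?k) \<or> snd ?w = snd (Qf n m 1 1 u ?k)" by (rule step_share)
      ultimately show False using eq by auto
    qed
  qed
qed

lemma ruleL:
  assumes b: "b \<noteq> 0"
    and adjG: "\<forall>v\<in>grid n m. \<forall>w\<in>grid n m. comm_adj (grid n m) (grid_centre a b) r v w \<longleftrightarrow> grid_adj v w"
    and u: "u \<in> grid n m" and t: "t \<ge> 0" and lv: "leftval (locL n m) u t (Some i)" and nn: "locL n m u t \<noteq> None"
  shows "(\<exists>j. comm_adj (grid n m) (grid_centre a b) r i j \<and> at_pos (fL b) gL i t (link_pos (grid_centre a b) i j)
              \<and> empty_before (grid n m) (locL n m) t j \<and> locL n m u t = Some j) \<or>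
         ((\<nexists>j. comm_adj (grid n m) (grid_centre a b) r i j \<and> at_pos (fL b) gL i t (link_pos (grid_centre a b) i j)
              \<and> empty_before (grid n m) (locL n m) t j) \<and> locL n m u t = Some i)"
proof -
  have uD: "u \<in> Dg n m" using nn t unfolding locL_def by (auto split: if_splits)
  let ?k = "nat (\<lceil>4*t + 1/2\<rceil> - 1)"
  have "leftval (locL n m) u t (Some (Qf n m 1 1 u ?k))" using LVd[OF uD t] .
  then have ik: "i = Qf n m 1 1 u ?k" using lv leftval_unique by fastforce
  have ig: "i \<in> grid n m" unfolding ik using Qf_grid u by blast
  have BRi: "(grid_adj i j \<and> at_pos (fL b) gL i t (link_pos (grid_centre a b) i j)) \<longleftrightarrow>
         (\<exists>e::int. 1/2 + 4*t = of_int e \<and> step n m e i = j \<and> j \<noteq> i)" if "j \<in> grid n m" for j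
    using BRL[OF b ig that] .
  have caj: "comm_adj (grid n m) (grid_centre a b) r i j \<longleftrightarrow> j \<in> grid n m \<and> grid_adj i j" for j
    using adjG ig unfolding comm_adj_def by blast
  show ?thesis
  proof (cases "\<exists>e::int. 1/2 + 4*t = of_int e")
    case True
    then obtain e :: int where pe: "1/2 + 4*t = of_int e" by blast
    note EF = ev_facts[OF t pe]
    have ike: "i = Qf n m 1 1 u (nat (e - 1))" using ik EF(3) by simp
    have "locL n m u t = Some (Qf n m 1 1 u (Suc (nat (e - 1))))" using uD t EF(4) unfolding locL_def by simp
    also have "Qf n m 1 1 u (Suc (nat (e - 1))) = step n m e i" using ike EF(5) by simp
    finally have lt: "locL n m u t = Some (step n m e i)" .
    show ?thesis
    proof (cases "step n m e i = i")
      case False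
      define w where "w = step n m e i"
      have wg: "w \<in> grid n m" unfolding w_def using step_grid ig by blast
      have "grid_adj i w \<and> at_pos (fL b) gL i t (link_pos (grid_centre a b) i w)"
        using BRi[OF wg] pe False unfolding w_def by blast
      then have "comm_adj (grid n m) (grid_centre a b) r i w" "at_pos (fL b) gL i t (link_pos (grid_centre a b) i w)"
        using caj wg by blast+
      moreover have "empty_before (grid n m) (locL n m) t w"
        unfolding w_def ike using EB[OF uD EF(2) pe] False ike by simp
      ultimately show ?thesis using lt unfolding w_def by blast
    next
      case True
      have "\<nexists>j. comm_adj (grid n m) (grid_centre a b) r i j \<and> at_pos (fL b) gL i t (link_pos (grid_centre a b) i j)"
      proof
        assume "\<exists>j. comm_adj (grid n m) (grid_centre a b) r i j \<and> at_pos (fL b) gL i t (link_pos (grid_centre a b) i j)"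
        then obtain j where "j \<in> grid n m" "grid_adj i j" "at_pos (fL b) gL i t (link_pos (grid_centre a b) i j)"
          using caj by blast
        then obtain e' :: int where "1/2 + 4*t = of_int e'" "step n m e' i = j" "j \<noteq> i" using BRi by blast
        then show False using pe True by simp
      qed
      then have "\<not> (\<exists>j. comm_adj (grid n m) (grid_centre a b) r i j \<and> at_pos (fL b) gL i t (link_pos (grid_centre a b) i j)
              \<and> empty_before (grid n m) (locL n m) t j)" by blast
      then show ?thesis using lt True by simp
    qed
  next
    case False
    have "?k = NL t" unfolding NL_def using noint_ceil[OF False] by simp
    then have lt: "locL n m u t = Some i" using uD t ik unfolding locL_def by simp
    have "\<nexists>j. comm_adj (grid n m) (grid_centre a b) r i j \<and> at_pos (fL b) gL i t (link_pos (grid_centre a b) i j)"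
    proof
      assume "\<exists>j. comm_adj (grid n m) (grid_centre a b) r i j \<and> at_pos (fL b) gL i t (link_pos (grid_centre a b) i j)"
      then obtain j where "j \<in> grid n m" "grid_adj i j" "at_pos (fL b) gL i t (link_pos (grid_centre a b) i j)"
        using caj by blast
      then obtain e' :: int where "1/2 + 4*t = of_int e'" using BRi by blast
      then show False using False by blast
    qed
    then show ?thesis using lt by blast
  qed
qed

lemma validL:
  assumes b: "b \<noteq> 0"
    and adjG: "\<forall>v\<in>grid n m. \<forall>w\<in>grid n m. comm_adj (grid n m) (grid_centre a b) r v w \<longleftrightarrow> grid_adj v w"
  shows "valid_run (grid n m) (grid_centre a b) r (fL b) gL (locL n m)"
  unfolding valid_run_def
proof (intro conjI ballI allI impI)
  fix u t assume "t < (0::real)" then show "locL n m u t = Some u" by (simp add: locL_def)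
next
  fix u t show "\<exists>\<epsilon>>0. \<forall>s. t \<le> s \<and> s < t + \<epsilon> \<longrightarrow> locL n m u s = locL n m u t" by (rule right_const)
next
  fix u t
  show "\<exists>x. leftval (locL n m) u t x"
  proof (cases "t \<le> 0")
    case True then show ?thesis using LV0 by blast
  next
    case False
    show ?thesis
    proof (cases "u \<in> Dg n m")
      case True
      have "0 \<le> t" using False by simp
      then show ?thesis using LVd[OF True] by blast
    next
      case nd: False
      have "0 < t" using False by simp
      then show ?thesis using LVn[OF nd] by blast
    qed
  qed
next
  fix u t s assume "t \<le> s \<and> locL n m u t = None"
  then show "locL n m u s = None" unfolding locL_def by (auto split: if_splits)
next
  fix u t i assume u: "u \<in> grid n m" and t: "0 \<le> t" and h: "leftval (locL n m) u t (Some i) \<and> locL n m u t \<noteq> None"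
  then show "(\<exists>j. comm_adj (grid n m) (grid_centre a b) r i j \<and> at_pos (fL b) gL i t (link_pos (grid_centre a b) i j)
              \<and> empty_before (grid n m) (locL n m) t j \<and> locL n m u t = Some j) \<or>
         ((\<nexists>j. comm_adj (grid n m) (grid_centre a b) r i j \<and> at_pos (fL b) gL i t (link_pos (grid_centre a b) i j)
              \<and> empty_before (grid n m) (locL n m) t j) \<and> locL n m u t = Some i)"
    using ruleL[OF b adjG u t] by blast
qed

lemma starvesL:
  assumes b: "b \<noteq> 0"
    and adjG: "\<forall>v\<in>grid n m. \<forall>w\<in>grid n m. comm_adj (grid n m) (grid_centre a b) r v w \<longleftrightarrow> grid_adj v w"
    and uD: "u \<in> Dg n m"
  shows "starves (grid n m) (grid_centre a b) r (fL b) gL (locL n m) u"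
  unfolding starves_def survives_def
proof (intro conjI allI impI)
  show "u \<in> grid n m" using uD Dg_grid by blast
  fix t show "locL n m u t \<noteq> None" using uD unfolding locL_def by simp
next
  fix t i j assume t: "0 \<le> t" and h: "leftval (locL n m) u t (Some i) \<and> comm_adj (grid n m) (grid_centre a b) r i j \<and>
        at_pos (fL b) gL i t (link_pos (grid_centre a b) i j)"
  have ig: "i \<in> grid n m" and jg: "j \<in> grid n m" and adj: "grid_adj i j" using h adjG unfolding comm_adj_def by blast+
  obtain e :: int where pe: "1/2 + 4*t = of_int e" and sw: "step n m e i = j" and ne: "j \<noteq> i"
    using BRL[OF b ig jg] adj h by blast
  note EF = ev_facts[OF t pe]
  have "leftval (locL n m) u t (Some (Qf n m 1 1 u (nat (e - 1))))" using LVd[OF uD t] EF(3) by simp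
  then have ik: "i = Qf n m 1 1 u (nat (e - 1))" using h leftval_unique by fastforce
  show "empty_before (grid n m) (locL n m) t j"
    using EB[OF uD EF(2) pe] sw ne ik by simp
qed

lemma card_Dg: "card (Dg n m) = min n m"
proof -
  have "Dg n m = (\<lambda>i. (i, i)) ` {..<min n m}" unfolding Dg_def grid_def by auto
  moreover have "inj_on (\<lambda>i::nat. (i, i)) {..<min n m}" by (auto simp: inj_on_def)
  ultimately show ?thesis by (simp add: card_image)
qed

lemma finite_grid: "finite (grid n m)"
proof -
  have "grid n m \<subseteq> {..<n} \<times> {..<m}" unfolding grid_def by auto
  then show ?thesis by (rule finite_subset) simp
qed

theorem corollary7:
  fixes n m :: nat and a b :: complex and r :: real
  assumes "n \<ge> 1" and "m \<ge> 1" and "r > 0" and "b \<noteq> 0"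
    and "\<forall>v\<in>grid n m. \<forall>w\<in>grid n m. v \<noteq> w \<longrightarrow> cmod (grid_centre a b v - grid_centre a b w) > 2"
    and "\<forall>v\<in>grid n m. \<forall>w\<in>grid n m. comm_adj (grid n m) (grid_centre a b) r v w \<longleftrightarrow> grid_adj v w"
  shows "starvation_number (grid n m) (grid_centre a b) r = min n m"
proof -
  note b = assms(4) and adjG = assms(6)
  define S where "S = {card {u\<in>grid n m. starves (grid n m) (grid_centre a b) r f g loc u} | f g loc.
            sync_schedule (grid n m) (grid_centre a b) r f g \<and> valid_run (grid n m) (grid_centre a b) r f g loc}"
  have g00: "(0::nat, 0::nat) \<in> grid n m" using assms(1,2) by (simp add: grid_def)
  have upper: "x \<le> min n m" if xS: "x \<in> S" for x
  proof -
    obtain f g loc where x: "x = card {u\<in>grid n m. starves (grid n m) (grid_centre a b) r f g loc u}"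
      and sy: "sync_schedule (grid n m) (grid_centre a b) r f g"
      and vr: "valid_run (grid n m) (grid_centre a b) r f g loc"
      using xS unfolding S_def by blast
    have gs: "g (0,0) = 1 \<or> g (0,0) = -1" using sync_g[OF sy g00] .
    define \<Psi>0 where "\<Psi>0 = (f (0,0) - Arg b) * 2 / pi"
    have psi: "Xv f g b (0,0) t = \<Psi>0 + 4 * g (0,0) * t" for t unfolding Xv_def \<Psi>0_def by (simp add: field_simps)
    obtain \<tau>0 :: real and si e0 :: int where ev1: "\<tau>0 \<ge> 0" and ev0: "si = 1 \<or> si = -1" and gsi: "g (0,0) = of_int si"
      and ev2: "\<And>j. \<Psi>0 + 4 * g (0,0) * (\<tau>0 + real j / 4) = of_int (e0 + si * int j)"
      and ev3: "\<And>t e. t \<ge> 0 \<Longrightarrow> \<Psi>0 + 4 * g (0,0) * t = of_int e \<Longrightarrow> \<exists>j::nat. t = \<tau>0 + real j / 4"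
      apply (rule events[OF gs, of \<Psi>0])
      subgoal premises p using p(1)[OF p(2) p(3) p(4) p(5) p(6)] .
      done
    have ev2': "Xv f g b (0,0) (\<tau>0 + real j / 4) = of_int (e0 + si * int j)" for j using ev2 psi by simp
    have ev3': "\<exists>j::nat. t = \<tau>0 + real j / 4" if "t \<ge> 0" "Xv f g b (0,0) t = of_int e" for t e
      using ev3 that psi by simp
    show ?thesis unfolding x by (rule card_bound[OF b adjG sy vr ev0 ev1 ev2' ev3'])
  qed
  let ?L = "card {u\<in>grid n m. starves (grid n m) (grid_centre a b) r (fL b) gL (locL n m) u}"
  have LS: "?L \<in> S" unfolding S_def using syncL[OF b adjG] validL[OF b adjG] by blast
  have "Dg n m \<subseteq> {u\<in>grid n m. starves (grid n m) (grid_centre a b) r (fL b) gL (locL n m) u}"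
    using starvesL[OF b adjG] Dg_grid by blast
  then have "card (Dg n m) \<le> ?L" by (rule card_mono[rotated]) (simp add: finite_grid)
  then have "min n m \<le> ?L" using card_Dg by simp
  then have L: "?L = min n m" using upper[OF LS] by simp
  have finS: "finite S"
  proof (rule finite_subset)
    show "S \<subseteq> {..card (grid n m)}" unfolding S_def
      by (auto intro!: card_mono simp: finite_grid)
  qed simp
  have mS: "min n m \<in> S" using LS by (simp only: L)
  have "Max S = min n m" by (rule Max_eqI[OF finS upper mS])
  then show ?thesis unfolding starvation_number_def S_def .
qed

end
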